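(* Assume the setting, hypotheses and Rothe scheme described in the context, and for every sufficiently small $\tau=T/N$ let $\{u_\tau^n\}_{n=1}^N$, $\{\xi_\tau^n\}_{n=1}^N$ be a solution of Problem $\mathcal P_\tau$, with $\bar u_\tau,u_\tau,\bar\xi_\tau$ defined as in the context. Then there is a constant $c>0$ independent of $\tau$ such that $$\|\bar u_\tau\|_{L^2(0,T;V)}\le c,\quad \|u_\tau\|_{L^2(0,T;V)}\le c,\quad \|\bar u_\tau\|_{L^\infty(0,T;H)}\le c,\quad \|u_\tau\|_{L^\infty(0,T;H)}\le c,$$ $$\|\bar\xi_\tau\|_{L^2(0,T;U^* )}\le c,\quad \|\bar u_\tau\|_{M^{2,2}(0,T;V,V^* )}\le c,\quad \|u_\tau'\|_{L^2(0,T;V^* )}\le c.$$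
   Context: $V$ is a real reflexive separable Banach space with norm $\|\cdot\|$, $H$ is a real separable Hilbert space with inner product $(\cdot,\cdot)$ and norm $|\cdot|$, identified with its dual, and $V\subset H\subset V^*$ with dense continuous embeddings, the embedding $V\subset H$ being compact; $\langle\cdot,\cdot\rangle$ is the $V^*\times V$ duality pairing, with $\langle u,v\rangle=(u,v)$ for $u\in H$, $v\in V$. $U$ is a reflexive Banach space, $T>0$. For locally Lipschitz $J\colon U\to\mathbb R$, $J^0(x;v)=\limsup_{y\to x,\lambda\downarrow0}\frac{J(y+\lambda v)-J(y)}{\lambda}$ and $\partial J(x)=\{\xi\in U^*:J^0(x;v)\ge\langle\xi,v\rangle_{U^*\times U}\ \forall v\in U\}$ (Clarke subdifferential); $\iota^*$ is the adjoint of $\iota$. Hypotheses: (H(A)) $A\colon V\to V^*$ is pseudomonotone (whenever $v_n\to v$ weakly in $V$ and $\limsup_n\langle Av_n,v_n-v\rangle\le0$, then $\langle Av,v-y\rangle\le\liminf_n\langle Av_n,v_n-y\rangle$ for all $y\in V$), $\|Av\|_{V^*}\le a+b\|v\|$ ($a\ge0,b>0$), $\langle Av,v\rangle\ge\alpha\|v\|^2-\beta|v|^2$ ($\alpha>0,\beta\ge0$) for all $v\in V$. (H(J)) $J$ is locally Lipschitz and $\|\xi\|_{U^*}\le d(1+\|u\|_U)$ for all $u\in U$, $\xi\in\partial J(u)$, $d>0$. (H($\iota$)) $\iota\colon V\to U$ is linear, continuous, compact, and $\iota=\iota_2\circ\iota_1$ where $Z$ is a Banach space with $V\subset Z\subset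 H$, $V\subset Z$ compact, $Z\subset H$ continuous, $\iota_1\colon V\to Z$ the identity and $\iota_2\colon Z\to U$ linear continuous. (H(f)) $f\in L^2(0,T;V^* )$. (H(0)) $u_0\in H$. Rothe scheme: for $N\in\mathbb N$, $\tau=T/N$, an element $u_\tau^0\in V$ is given for each $\tau$, such that $u_\tau^0\to u_0$ strongly in $H$ as $\tau\to0$ and $\|u_\tau^0\|\le c_0/\sqrt\tau$ with $c_0$ independent of $\tau$. Set $f_\tau^1=\frac1\tau\int_0^\tau f\,dt$ and $f_\tau^n=\frac{3}{2\tau}\int_{(n-1)\tau}^{n\tau}f\,dt-\frac1{2\tau}\int_{(n-2)\tau}^{(n-1)\tau}f\,dt$, $n=2,\dots,N$. Problem $\mathcal P_\tau$: find $\{u_\tau^n\}_{n=1}^N\subset V$ and $\{\xi_\tau^n\}_{n=1}^N\subset U^*$ with $\frac1\tau(u_\tau^1-u_\tau^0)+Au_\tau^1+\iota^*\xi_\tau^1=f_\tau^1$, $\xi_\tau^1\in\partial J(\iota u_\tau^1)$, and for $n=2,\dots,N$: $\frac1\tau(\frac32u_\tau^n-2u_\tau^{n-1}+\frac12u_\tau^{n-2})+Au_\tau^n+\iota^*\xi_\tau^n=f_\tau^n$, $\xi_\tau^n\in\partial J(\iota u_\tau^n)$. Interpolants: $\bar u_\tau(0)=u_\tau^0$, $\bar u_\tau(t)=u_\tau^n$ and $\bar\xi_\tau(t)=\xi_\tau^n$ for $t\in((n-1)\tau,n\tau]$, $n=1,\dots,N$; $u_\tau(t)=\frac32u_\tau^1-\frac12u_\tau^0+(u_\tau^1-u_\tau^0)\frac{t-\tau}{\tau}$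 for $t\in[0,\tau]$, and $u_\tau(t)=\frac32u_\tau^n-\frac12u_\tau^{n-1}+(\frac32u_\tau^n-2u_\tau^{n-1}+\frac12u_\tau^{n-2})\frac{t-n\tau}{\tau}$ for $t\in[(n-1)\tau,n\tau]$, $n=2,\dots,N$; $u_\tau'$ is its time derivative. Space $M^{2,2}$: for $x\colon[0,T]\to V^*$, $\|x\|_{BV^2(0,T;V^* )}^2=\sup_\pi\sum_i\|x(b_i)-x(a_i)\|_{V^*}^2$, the supremum over all finite partitions $\pi$ of $[0,T]$ into disjoint open intervals $(a_i,b_i)$ whose closures cover $[0,T]$; $M^{2,2}(0,T;V,V^* )=L^2(0,T;V)\cap BV^2(0,T;V^* )$ with norm $\|\cdot\|_{L^2(0,T;V)}+\|\cdot\|_{BV^2(0,T;V^* )}$. *)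

theory Defs
  imports "HOL-Analysis.Analysis" "HOL-Probability.Essential_Supremum"
begin

definition separable_space :: "'a::metric_space itself \<Rightarrow> bool" where
  "separable_space _ \<longleftrightarrow> (\<exists>D::'a set. countable D \<and> closure D = UNIV)"

definition reflexive_space :: "'a::real_normed_vector itself \<Rightarrow> bool" where
  "reflexive_space _ \<longleftrightarrow>
     (\<forall>\<phi> :: ('a \<Rightarrow>\<^sub>L real) \<Rightarrow>\<^sub>L real. \<exists>x::'a. \<forall>g. blinfun_apply \<phi> g = blinfun_apply g x)"

definition compact_operator :: "('a::real_normed_vector \<Rightarrow> 'b::real_normed_vector) \<Rightarrow> bool" where
  "compact_operator T \<longleftrightarrow> bounded_linear T \<and> (\<forall>B. bounded B \<longrightarrow> compact (closure (T ` B)))"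

definition weak_conv :: "(nat \<Rightarrow> 'a::real_normed_vector) \<Rightarrow> 'a \<Rightarrow> bool" where
  "weak_conv xs x \<longleftrightarrow> (\<forall>g :: 'a \<Rightarrow>\<^sub>L real. (\<lambda>n. blinfun_apply g (xs n)) \<longlonglongrightarrow> blinfun_apply g x)"

definition pseudomonotone :: "('v::real_normed_vector \<Rightarrow> ('v \<Rightarrow>\<^sub>L real)) \<Rightarrow> bool" where
  "pseudomonotone A \<longleftrightarrow>
     (\<forall>vs v. weak_conv vs v \<and> limsup (\<lambda>n. ereal (blinfun_apply (A (vs n)) (vs n - v))) \<le> 0 \<longrightarrow>
        (\<forall>y. ereal (blinfun_apply (A v) (v - y)) \<le> liminf (\<lambda>n. ereal (blinfun_apply (A (vs n)) (vs n - y)))))"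

definition locally_lipschitz :: "('a::metric_space \<Rightarrow> real) \<Rightarrow> bool" where
  "locally_lipschitz J \<longleftrightarrow> (\<forall>x. \<exists>S L. open S \<and> x \<in> S \<and> L-lipschitz_on S J)"

definition clarke_dd :: "('u::real_normed_vector \<Rightarrow> real) \<Rightarrow> 'u \<Rightarrow> 'u \<Rightarrow> ereal" where
  "clarke_dd J x v = Limsup (nhds x \<times>\<^sub>F at_right 0)
      (\<lambda>(y, l). ereal ((J (y + l *\<^sub>R v) - J y) / l))"

definition clarke_subdiff :: "('u::real_normed_vector \<Rightarrow> real) \<Rightarrow> 'u \<Rightarrow> ('u \<Rightarrow>\<^sub>L real) set" where
  "clarke_subdiff J x = {\<xi>. \<forall>v. ereal (blinfun_apply \<xi> v) \<le> clarke_dd J x v}"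

text \<open>Element of V seen in V* via V \<subset> H = H* \<subset> V*, and element of H seen in V*.\<close>
definition toVs :: "('v::real_normed_vector \<Rightarrow> 'h::real_inner) \<Rightarrow> 'v \<Rightarrow> ('v \<Rightarrow>\<^sub>L real)" where
  "toVs j v = Blinfun (\<lambda>w. inner (j v) (j w))"

definition HtoVs :: "('v::real_normed_vector \<Rightarrow> 'h::real_inner) \<Rightarrow> 'h \<Rightarrow> ('v \<Rightarrow>\<^sub>L real)" where
  "HtoVs j h = Blinfun (\<lambda>w. inner h (j w))"

definition ensqrt :: "ennreal \<Rightarrow> ennreal" where
  "ensqrt x = (if x = top then top else ennreal (sqrt (enn2real x)))"

definition L2_norm :: "real \<Rightarrow> (real \<Rightarrow> 'a::real_normed_vector) \<Rightarrow> ennreal" where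
  "L2_norm T g = ensqrt (\<integral>\<^sup>+ t. ennreal ((norm (g t))\<^sup>2) \<partial>lebesgue_on {0..T})"

definition Linf_norm :: "real \<Rightarrow> (real \<Rightarrow> 'a::real_normed_vector) \<Rightarrow> ereal" where
  "Linf_norm T g = esssup (lebesgue_on {0..T}) (\<lambda>t. ereal (norm (g t)))"

definition partitions :: "real \<Rightarrow> real list set" where
  "partitions T = {p. sorted_wrt (<) p \<and> length p \<ge> 2 \<and> hd p = 0 \<and> last p = T}"

definition BV2_norm :: "real \<Rightarrow> (real \<Rightarrow> 'a::real_normed_vector) \<Rightarrow> ennreal" where
  "BV2_norm T x = ensqrt (SUP p \<in> partitions T.
      ennreal (\<Sum>i < length p - 1. (norm (x (p ! Suc i) - x (p ! i)))\<^sup>2))"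

definition M22_norm :: "real \<Rightarrow> ('v::real_normed_vector \<Rightarrow> 'h::real_inner) \<Rightarrow> (real \<Rightarrow> 'v) \<Rightarrow> ennreal" where
  "M22_norm T j x = L2_norm T x + BV2_norm T (\<lambda>t. toVs j (x t))"

definition ftau :: "real \<Rightarrow> (real \<Rightarrow> ('v::real_normed_vector \<Rightarrow>\<^sub>L real)) \<Rightarrow> nat \<Rightarrow> nat \<Rightarrow> 'v \<Rightarrow> real" where
  "ftau T f N n v = (let \<tau> = T / real N in
     if n = 1 then (1 / \<tau>) * (\<integral>t. blinfun_apply (f t) v \<partial>lebesgue_on {0..\<tau>})
     else (3 / (2 * \<tau>)) * (\<integral>t. blinfun_apply (f t) v \<partial>lebesgue_on {(real n - 1) * \<tau> .. real n * \<tau>})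
        - (1 / (2 * \<tau>)) * (\<integral>t. blinfun_apply (f t) v \<partial>lebesgue_on {(real n - 2) * \<tau> .. (real n - 1) * \<tau>}))"

text \<open>Problem P_tau: us n = u_tau^n (n = 0..N, us 0 the given initial value), xis n = xi_tau^n.
  Equations in V* are stated by testing with every v \<in> V; \<iota>* \<xi> applied to v is \<xi>(\<iota> v).\<close>
definition rothe_solution ::
  "('v::real_normed_vector \<Rightarrow> 'h::real_inner) \<Rightarrow> ('v \<Rightarrow> ('v \<Rightarrow>\<^sub>L real)) \<Rightarrow> ('v \<Rightarrow> 'u::real_normed_vector)
   \<Rightarrow> ('u \<Rightarrow> real) \<Rightarrow> (real \<Rightarrow> ('v \<Rightarrow>\<^sub>L real)) \<Rightarrow> real \<Rightarrow> nat
   \<Rightarrow> (nat \<Rightarrow> 'v) \<Rightarrow> (nat \<Rightarrow> ('u \<Rightarrow>\<^sub>L real)) \<Rightarrow> bool" where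
  "rothe_solution j A iota J f T N us xis \<longleftrightarrow> (let \<tau> = T / real N in
     (\<forall>v. inner (j (us 1 - us 0)) (j v) / \<tau> + blinfun_apply (A (us 1)) v
            + blinfun_apply (xis 1) (iota v) = ftau T f N 1 v)
     \<and> xis 1 \<in> clarke_subdiff J (iota (us 1))
     \<and> (\<forall>n \<in> {2..N}.
          (\<forall>v. inner (j ((3/2) *\<^sub>R us n - 2 *\<^sub>R us (n - 1) + (1/2) *\<^sub>R us (n - 2))) (j v) / \<tau>
               + blinfun_apply (A (us n)) v + blinfun_apply (xis n) (iota v) = ftau T f N n v)
          \<and> xis n \<in> clarke_subdiff J (iota (us n))))"

definition ubar :: "real \<Rightarrow> nat \<Rightarrow> (nat \<Rightarrow> 'v) \<Rightarrow> real \<Rightarrow> 'v" where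
  "ubar T N us t = (if t \<le> 0 then us 0 else us (nat \<lceil>t / (T / real N)\<rceil>))"

definition xibar :: "real \<Rightarrow> nat \<Rightarrow> (nat \<Rightarrow> 'a) \<Rightarrow> real \<Rightarrow> 'a" where
  "xibar T N xis t = xis (nat \<lceil>t / (T / real N)\<rceil>)"

definition uhat :: "real \<Rightarrow> nat \<Rightarrow> (nat \<Rightarrow> 'v::real_vector) \<Rightarrow> real \<Rightarrow> 'v" where
  "uhat T N us t = (let \<tau> = T / real N; n = max 1 (nat \<lceil>t / \<tau>\<rceil>) in
     if n = 1 then (3/2) *\<^sub>R us 1 - (1/2) *\<^sub>R us 0 + ((t - \<tau>) / \<tau>) *\<^sub>R (us 1 - us 0)
     else (3/2) *\<^sub>R us n - (1/2) *\<^sub>R us (n - 1)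
          + ((t - real n * \<tau>) / \<tau>) *\<^sub>R ((3/2) *\<^sub>R us n - 2 *\<^sub>R us (n - 1) + (1/2) *\<^sub>R us (n - 2)))"

end

theory Submission
  imports Defs
begin

lemma ensqrt_le:
  assumes "X \<le> ennreal (c\<^sup>2)" "c \<ge> 0"
  shows "ensqrt X \<le> ennreal c"
proof -
  have nt: "X \<noteq> top" using assms(1) by (metis ennreal_neq_top top.extremum_uniqueI)
  have "enn2real X \<le> c\<^sup>2" using assms(1) nt
    by (simp add: enn2real_leI)
  then have "sqrt (enn2real X) \<le> c" using assms(2) real_sqrt_le_iff
    by (simp add: real_le_lsqrt)
  then show ?thesis unfolding ensqrt_def using nt by (simp add: ennreal_leI)
qed

lemma ehrling0:
  fixes i1 :: "'v::real_normed_vector \<Rightarrow> 'z::real_normed_vector" and i2 :: "'z \<Rightarrow> 'h::real_normed_vector"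
  assumes c1: "compact_operator i1" and l2: "bounded_linear i2" and inj2: "inj i2" and ep: "\<epsilon> > 0"
  shows "\<exists>C. \<forall>v. norm (i1 v) \<le> \<epsilon> * norm v + C * norm (i2 (i1 v))"
proof (rule ccontr)
  assume "\<not> ?thesis"
  then have "\<forall>n::nat. \<exists>v. norm (i1 v) > \<epsilon> * norm v + real n * norm (i2 (i1 v))"
    by (metis not_le)
  then obtain v where v: "\<And>n. norm (i1 (v n)) > \<epsilon> * norm (v n) + real n * norm (i2 (i1 (v n)))"
    by metis
  have l1: "bounded_linear i1" using c1 unfolding compact_operator_def by auto
  have vne: "v n \<noteq> 0" for n
  proof
    assume "v n = 0"
    then show False using v[of n] linear_simps(3)[OF l1] linear_simps(3)[OF l2] by simp
  qed
  define w where "w n = (1 / norm (v n)) *\<^sub>R v n" for n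
  have wn: "norm (w n) = 1" for n using vne[of n] by (simp add: w_def)
  have key: "norm (i1 (w n)) > \<epsilon> + real n * norm (i2 (i1 (w n)))" for n
  proof -
    have pos: "norm (v n) > 0" using vne[of n] by simp
    have e1: "i1 (w n) = (1 / norm (v n)) *\<^sub>R i1 (v n)" unfolding w_def
      using linear_simps(5)[OF l1] by simp
    have e2: "i2 (i1 (w n)) = (1 / norm (v n)) *\<^sub>R i2 (i1 (v n))" unfolding e1
      using linear_simps(5)[OF l2] by simp
    have "(\<epsilon> * norm (v n) + real n * norm (i2 (i1 (v n)))) / norm (v n)
          < norm (i1 (v n)) / norm (v n)"
      using v[of n] pos by (simp add: divide_strict_right_mono)
    then show ?thesis using pos unfolding e1 by (simp add: add_divide_distrib linear_simps(5)[OF l2])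
  qed
  obtain K where K: "\<And>x. norm (i1 x) \<le> norm x * K" "K > 0"
    using bounded_linear.pos_bounded[OF l1] by blast
  have i1wK: "norm (i1 (w n)) \<le> K" for n using K(1)[of "w n"] wn[of n] by simp
  define S where "S = closure (i1 ` cball 0 1)"
  have "compact S" unfolding S_def using c1 unfolding compact_operator_def by auto
  then have sc: "seq_compact S" by (simp add: compact_imp_seq_compact)
  have inS: "\<forall>n. i1 (w n) \<in> S" unfolding S_def using wn
    by (metis closure_subset dual_order.refl image_eqI mem_cball_0 subsetD)
  obtain l r where r: "strict_mono r" and lim: "((\<lambda>n. i1 (w n)) \<circ> r) \<longlonglongrightarrow> l"
    using seq_compactE[OF sc inS] by blast
  have lim2: "(\<lambda>n. i2 (i1 (w (r n)))) \<longlonglongrightarrow> i2 l"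
    using bounded_linear.tendsto[OF l2 lim] by (simp add: o_def)
  have rle: "real n \<le> real (r n)" for n using seq_suble[OF r, of n] by simp
  have bnd: "norm (i2 (i1 (w (r n)))) \<le> K / real n" if "n > 0" for n
  proof -
    have "real (r n) * norm (i2 (i1 (w (r n)))) < K"
      using key[of "r n"] i1wK[of "r n"] ep by linarith
    then have "real n * norm (i2 (i1 (w (r n)))) \<le> K"
      using rle[of n] by (smt (verit) mult_right_mono norm_ge_zero)
    then show ?thesis using that by (simp add: field_simps)
  qed
  have lk: "(\<lambda>n. K / real n) \<longlonglongrightarrow> 0"
    by (simp add: tendsto_divide_0 filterlim_real_sequentially tendsto_const lim_const_over_n)
  have ev: "eventually (\<lambda>n. norm (i2 (i1 (w (r n)))) \<le> K / real n) sequentially"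
    using eventually_gt_at_top[of "0::nat"] by (rule eventually_mono) (rule bnd)
  have lim0: "(\<lambda>n. i2 (i1 (w (r n)))) \<longlonglongrightarrow> 0"
    by (rule Lim_null_comparison[OF ev lk])
  have "i2 l = 0" using LIMSEQ_unique[OF lim2 lim0] .
  then have "l = 0" using inj2 linear_simps(3)[OF l2] by (metis injD)
  then have "(\<lambda>n. norm (i1 (w (r n)))) \<longlonglongrightarrow> 0"
    using tendsto_norm[OF lim] by (simp add: o_def)
  then have "eventually (\<lambda>n. norm (i1 (w (r n))) < \<epsilon>) sequentially"
    using ep by (simp add: order_tendsto_iff)
  then obtain n where "norm (i1 (w (r n))) < \<epsilon>" by (meson eventually_sequentially order_refl)
  moreover have "norm (i1 (w (r n))) > \<epsilon>"
    using key[of "r n"] by (smt (verit) mult_nonneg_nonneg norm_ge_zero of_nat_0_le_iff)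
  ultimately show False by simp
qed


lemma ehrling_iota:
  fixes i1 :: "'v::real_normed_vector \<Rightarrow> 'z::real_normed_vector" and i2 :: "'z \<Rightarrow> 'h::real_normed_vector"
    and iota2 :: "'z \<Rightarrow> 'u::real_normed_vector"
  assumes c1: "compact_operator i1" and l2: "bounded_linear i2" and inj2: "inj i2"
    and li: "bounded_linear iota2" and fi: "iota = iota2 \<circ> i1" and fj: "j = i2 \<circ> i1" and dp: "\<delta> > 0"
  shows "\<exists>Ce\<ge>0. \<forall>v. (norm (iota v))\<^sup>2 \<le> \<delta> * (norm v)\<^sup>2 + Ce * (norm (j v))\<^sup>2"
proof -
  obtain K2 where K2: "\<And>z. norm (iota2 z) \<le> norm z * K2" "K2 > 0"
    using bounded_linear.pos_bounded[OF li] by blast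
  define \<epsilon> where "\<epsilon> = sqrt (\<delta> / 2) / K2"
  have ep: "\<epsilon> > 0" unfolding \<epsilon>_def using dp K2(2) by simp
  obtain C where C: "\<And>v. norm (i1 v) \<le> \<epsilon> * norm v + C * norm (i2 (i1 v))"
    using ehrling0[OF c1 l2 inj2 ep] by blast
  show ?thesis
  proof (intro exI[of _ "2 * K2\<^sup>2 * C\<^sup>2"] conjI allI)
    show "0 \<le> 2 * K2\<^sup>2 * C\<^sup>2" by simp
    fix v
    have a: "norm (i1 v) \<le> \<epsilon> * norm v + \<bar>C\<bar> * norm (j v)"
      using C[of v] unfolding fj o_def by (smt (verit) abs_ge_self mult_right_mono norm_ge_zero)
    have "norm (iota v) \<le> K2 * (\<epsilon> * norm v + \<bar>C\<bar> * norm (j v))"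
      using K2(1)[of "i1 v"] a K2(2) unfolding fi o_def
      by (smt (verit, best) mult.commute mult_left_mono)
    also have "\<dots> = sqrt (\<delta> / 2) * norm v + K2 * \<bar>C\<bar> * norm (j v)"
      unfolding \<epsilon>_def using K2(2) by (simp add: algebra_simps)
    finally have b: "norm (iota v) \<le> sqrt (\<delta> / 2) * norm v + K2 * \<bar>C\<bar> * norm (j v)" .
    have "(norm (iota v))\<^sup>2 \<le> (sqrt (\<delta> / 2) * norm v + K2 * \<bar>C\<bar> * norm (j v))\<^sup>2"
      using b by (simp add: power_mono)
    also have "\<dots> \<le> 2 * (sqrt (\<delta> / 2) * norm v)\<^sup>2 + 2 * (K2 * \<bar>C\<bar> * norm (j v))\<^sup>2"
      by (smt (verit) sum_squares_bound zero_le_power2 power2_sum)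
    also have "\<dots> = \<delta> * (norm v)\<^sup>2 + 2 * K2\<^sup>2 * C\<^sup>2 * (norm (j v))\<^sup>2"
      using dp by (simp add: power_mult_distrib)
    finally show "(norm (iota v))\<^sup>2 \<le> \<delta> * (norm v)\<^sup>2 + 2 * K2\<^sup>2 * C\<^sup>2 * (norm (j v))\<^sup>2" .
  qed
qed

lemma toVs_apply:
  assumes "bounded_linear j"
  shows "blinfun_apply (toVs j v) w = inner (j v) (j w)"
proof -
  have "bounded_linear (\<lambda>w. inner (j v) (j w))"
    using bounded_linear_compose[OF bounded_linear_inner_right assms] by simp
  then show ?thesis unfolding toVs_def by (simp add: bounded_linear_Blinfun_apply)
qed

lemma toVs_add:
  assumes "bounded_linear j"
  shows "toVs j (x + y) = toVs j x + toVs j y"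
  by (rule blinfun_eqI) (simp add: toVs_apply[OF assms] linear_simps[OF assms] inner_add_left plus_blinfun.rep_eq)

lemma toVs_diff:
  assumes "bounded_linear j"
  shows "toVs j (x - y) = toVs j x - toVs j y"
  by (rule blinfun_eqI) (simp add: toVs_apply[OF assms] linear_simps[OF assms] inner_diff_left minus_blinfun.rep_eq)

lemma toVs_scaleR:
  assumes "bounded_linear j"
  shows "toVs j (c *\<^sub>R x) = c *\<^sub>R toVs j x"
  by (rule blinfun_eqI) (simp add: toVs_apply[OF assms] linear_simps[OF assms] scaleR_blinfun.rep_eq)

lemma sum_shift1:
  fixes h :: "nat \<Rightarrow> real"
  shows "(\<Sum>n\<in>{1..N}. h (n - 1)) = (\<Sum>k<N. h k)"
  by (induction N) (auto simp: atLeastAtMostSuc_conv)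

lemma sum_shift1_le:
  fixes h :: "nat \<Rightarrow> real"
  assumes "\<And>k. h k \<ge> 0"
  shows "(\<Sum>n\<in>{1..N}. h (n - 1)) \<le> (\<Sum>k\<in>{0..N}. h k)"
proof -
  have "(\<Sum>k<N. h k) \<le> (\<Sum>k\<in>{0..N}. h k)"
    by (rule sum_mono2) (auto simp: assms)
  then show ?thesis using sum_shift1 by simp
qed

lemma sum_shift2_le:
  fixes h :: "nat \<Rightarrow> real"
  assumes "\<And>k. h k \<ge> 0"
  shows "(\<Sum>n\<in>{1..N}. h (n - 2)) \<le> 2 * (\<Sum>k\<in>{0..N}. h k)"
proof -
  have "(\<Sum>n\<in>{1..N}. h (n - 2)) = (\<Sum>n\<in>{1..N}. (\<lambda>k. h (k - 1)) (n - 1))"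
    by (simp add: numeral_2_eq_2)
  also have "\<dots> \<le> (\<Sum>k\<in>{0..N}. h (k - 1))"
    by (rule sum_shift1_le) (simp add: assms)
  also have "\<dots> = h 0 + (\<Sum>k\<in>{1..N}. h (k - 1))"
    by (simp add: sum.atLeast_Suc_atMost)
  also have "\<dots> \<le> h 0 + (\<Sum>k\<in>{0..N}. h k)"
    using sum_shift1_le[of h N] assms by simp
  also have "\<dots> \<le> 2 * (\<Sum>k\<in>{0..N}. h k)"
  proof -
    have "h 0 \<le> (\<Sum>k\<in>{0..N}. h k)"
      using member_le_sum[of 0 "{0..N}" h] assms by simp
    then show ?thesis by simp
  qed
  finally show ?thesis .
qed

lemma geom_sum_aux:
  fixes q :: real
  shows "(\<Sum>n\<in>{1..m}. 2 * q * (1 + 2 * q) ^ n) = (1 + 2 * q) ^ Suc m - (1 + 2 * q)"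
  by (induction m) (auto simp: algebra_simps)

lemma dgronwall:
  fixes E :: "nat \<Rightarrow> real"
  assumes q0: "q \<ge> 0" and q1: "q \<le> 1/2" and B0: "B \<ge> 0"
    and E0: "\<And>n. E n \<ge> 0"
    and rec: "\<And>m. m \<in> {1..N} \<Longrightarrow> E m \<le> B + q * (\<Sum>n\<in>{1..m}. E n)"
  shows "m \<in> {1..N} \<Longrightarrow> E m \<le> 2 * B * (1 + 2 * q) ^ m"
proof (induction m rule: less_induct)
  case (less m)
  have IH: "\<And>n. n \<in> {1..m - 1} \<Longrightarrow> E n \<le> 2 * B * (1 + 2 * q) ^ n"
    using less by auto
  have m1: "m \<ge> 1" using less.prems by auto
  have split: "(\<Sum>n\<in>{1..m}. E n) = (\<Sum>n\<in>{1..m-1}. E n) + E m"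
    using m1 by (cases m) auto
  have s: "(\<Sum>n\<in>{1..m-1}. E n) \<le> (\<Sum>n\<in>{1..m-1}. 2 * B * (1 + 2 * q) ^ n)"
    by (rule sum_mono) (rule IH)
  have "E m \<le> B + q * (\<Sum>n\<in>{1..m-1}. E n) + q * E m"
    using rec[OF less.prems] split by (simp add: algebra_simps)
  moreover have "q * (\<Sum>n\<in>{1..m-1}. E n) \<le> q * (\<Sum>n\<in>{1..m-1}. 2 * B * (1 + 2 * q) ^ n)"
    using s q0 by (rule mult_left_mono)
  ultimately have "(1 - q) * E m \<le> B + q * (\<Sum>n\<in>{1..m-1}. 2 * B * (1 + 2 * q) ^ n)"
    by (simp add: algebra_simps)
  also have "q * (\<Sum>n\<in>{1..m-1}. 2 * B * (1 + 2 * q) ^ n) = B * (\<Sum>n\<in>{1..m-1}. 2 * q * (1 + 2 * q) ^ n)"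
    by (simp add: sum_distrib_left algebra_simps)
  also have "\<dots> = B * ((1 + 2 * q) ^ m - (1 + 2 * q))"
    using geom_sum_aux[of q "m - 1"] m1 by simp
  finally have a: "(1 - q) * E m \<le> B * (1 + 2 * q) ^ m - B * (2 * q)"
    by (simp add: algebra_simps)
  have "(q * 2) * E m \<le> 1 * E m" using q1 E0[of m] by (intro mult_right_mono) auto
  then have "E m \<le> 2 * ((1 - q) * E m)" by (simp add: algebra_simps)
  also have "\<dots> \<le> 2 * (B * (1 + 2 * q) ^ m)" using a B0 q0 by (smt (verit) mult_nonneg_nonneg)
  finally show ?case by simp
qed



lemma int_bound:
  fixes f :: "real \<Rightarrow> ('v::real_normed_vector \<Rightarrow>\<^sub>L real)"
  assumes fm: "f \<in> borel_measurable (lebesgue_on {0..T})" and sub: "{x..y} \<subseteq> {0..T}" and xy: "x < y"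
    and FS: "(\<integral>\<^sup>+ t. ennreal ((norm (f t))\<^sup>2) \<partial>lebesgue_on {x..y}) = ennreal F" and F0: "F \<ge> 0"
  shows "\<bar>\<integral>t. blinfun_apply (f t) v \<partial>lebesgue_on {x..y}\<bar> \<le> norm v * ((y - x) * sqrt ((F + (y - x)) / (y - x)))"
proof -
  define M where "M = lebesgue_on {x..y}"
  define l where "l = y - x"
  define s where "s = sqrt ((F + l) / l)"
  have l0: "l > 0" using xy l_def by simp
  have s0: "s > 0" unfolding s_def using l0 F0 by simp
  have s2: "s\<^sup>2 = (F + l) / l" unfolding s_def using l0 F0 by simp
  have fmS: "f \<in> borel_measurable M" unfolding M_def by (rule measurable_restrict_mono[OF fm sub])
  have m1: "(\<lambda>t. ennreal ((norm (f t))\<^sup>2)) \<in> borel_measurable M" using fmS by measurable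
  have 1: "ennreal \<bar>\<integral>t. blinfun_apply (f t) v \<partial>M\<bar> \<le> (\<integral>\<^sup>+ t. ennreal (norm (blinfun_apply (f t) v)) \<partial>M)"
  proof (cases "integrable M (\<lambda>t. blinfun_apply (f t) v)")
    case True
    then show ?thesis using integral_norm_bound_ennreal[OF True] by simp
  next
    case False
    then show ?thesis by (simp add: not_integrable_integral_eq)
  qed
  have 2: "(\<integral>\<^sup>+ t. ennreal (norm (blinfun_apply (f t) v)) \<partial>M)
      \<le> (\<integral>\<^sup>+ t. ennreal (norm v / (2 * s)) * ennreal ((norm (f t))\<^sup>2) + ennreal (norm v * s / 2) \<partial>M)"
  proof (rule nn_integral_mono)
    fix t
    have a: "norm (blinfun_apply (f t) v) \<le> norm (f t) * norm v" by (rule norm_blinfun)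
    have b: "norm (f t) \<le> (norm (f t))\<^sup>2 / (2 * s) + s / 2"
    proof -
      have "0 \<le> (norm (f t) - s)\<^sup>2" by simp
      then have "2 * s * norm (f t) \<le> (norm (f t))\<^sup>2 + s\<^sup>2" by (simp add: power2_diff algebra_simps)
      then show ?thesis using s0 by (simp add: field_simps power2_eq_square)
    qed
    have "norm (blinfun_apply (f t) v) \<le> norm v * ((norm (f t))\<^sup>2 / (2 * s) + s / 2)"
    proof -
      have "norm (f t) * norm v \<le> ((norm (f t))\<^sup>2 / (2 * s) + s / 2) * norm v"
        using b by (rule mult_right_mono) simp
      then show ?thesis using a by (simp add: mult.commute)
    qed
    also have "\<dots> = norm v / (2 * s) * (norm (f t))\<^sup>2 + norm v * s / 2" by (simp add: algebra_simps)
    finally have le: "ennreal (norm (blinfun_apply (f t) v)) \<le> ennreal (norm v / (2 * s) * (norm (f t))\<^sup>2 + norm v * s / 2)"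
      by (rule ennreal_leI)
    have e1: "ennreal (norm v / (2 * s) * (norm (f t))\<^sup>2) = ennreal (norm v / (2 * s)) * ennreal ((norm (f t))\<^sup>2)"
      by (rule ennreal_mult) (use s0 in auto)
    have e2: "ennreal (norm v / (2 * s) * (norm (f t))\<^sup>2 + norm v * s / 2) = ennreal (norm v / (2 * s) * (norm (f t))\<^sup>2) + ennreal (norm v * s / 2)"
      by (rule ennreal_plus) (use s0 in auto)
    have eq: "ennreal (norm v / (2 * s) * (norm (f t))\<^sup>2 + norm v * s / 2)
       = ennreal (norm v / (2 * s)) * ennreal ((norm (f t))\<^sup>2) + ennreal (norm v * s / 2)"
      by (simp only: e2 e1)
    show "ennreal (norm (blinfun_apply (f t) v)) \<le> ennreal (norm v / (2 * s)) * ennreal ((norm (f t))\<^sup>2) + ennreal (norm v * s / 2)"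
      using le eq by simp
  qed
  have emM: "emeasure M (space M) = ennreal l"
    unfolding M_def l_def using xy by (simp add: emeasure_restrict_space)
  have 3: "(\<integral>\<^sup>+ t. ennreal (norm v / (2 * s)) * ennreal ((norm (f t))\<^sup>2) + ennreal (norm v * s / 2) \<partial>M)
       = ennreal (norm v / (2 * s)) * ennreal F + ennreal (norm v * s / 2) * ennreal l"
    using m1 FS emM unfolding M_def[symmetric]
    by (simp add: nn_integral_add nn_integral_cmult)
  also have "\<dots> = ennreal (norm v / (2 * s) * F + norm v * s / 2 * l)"
  proof -
    have a1: "ennreal (norm v / (2 * s) * F + norm v * s / 2 * l) = ennreal (norm v / (2 * s) * F) + ennreal (norm v * s / 2 * l)"
      by (rule ennreal_plus) (use s0 F0 l0 in auto)
    have a2: "ennreal (norm v / (2 * s) * F) = ennreal (norm v / (2 * s)) * ennreal F"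
      by (rule ennreal_mult) (use s0 F0 in auto)
    have a3: "ennreal (norm v * s / 2 * l) = ennreal (norm v * s / 2) * ennreal l"
      by (rule ennreal_mult) (use s0 l0 in auto)
    show ?thesis by (simp only: a1 a2 a3)
  qed
  also have "\<dots> \<le> ennreal (norm v * (l * s))"
  proof (rule ennreal_leI)
    have "F \<le> s\<^sup>2 * l" using s2 l0 by simp
    then have "F / (2 * s) \<le> s * l / 2" using s0 by (simp add: field_simps power2_eq_square)
    then have "norm v * (F / (2 * s)) \<le> norm v * (s * l / 2)" by (rule mult_left_mono) simp
    then show "norm v / (2 * s) * F + norm v * s / 2 * l \<le> norm v * (l * s)"
      by (simp add: algebra_simps)
  qed
  finally have "ennreal \<bar>\<integral>t. blinfun_apply (f t) v \<partial>M\<bar> \<le> ennreal (norm v * (l * s))"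
    using 1 2 by (meson order_trans)
  moreover have "0 \<le> norm v * (l * s)" using l0 s0 by simp
  ultimately have "\<bar>\<integral>t. blinfun_apply (f t) v \<partial>M\<bar> \<le> norm v * (l * s)"
    using ennreal_le_iff by blast
  then show ?thesis unfolding M_def l_def s_def .
qed


lemma id_meas_leb[measurable]: "(\<lambda>x::real. x) \<in> borel_measurable (lebesgue_on S)"
  by (rule measurable_restrict_space1) (rule measurable_completion, simp add: measurable_lborel2)

definition Fk :: "real \<Rightarrow> (real \<Rightarrow> 'a::real_normed_vector) \<Rightarrow> real \<Rightarrow> nat \<Rightarrow> real" where
  "Fk T f \<tau> k = enn2real (\<integral>\<^sup>+ t. ennreal ((norm (f t))\<^sup>2 * indicator ({(real k - 1) * \<tau> .. real k * \<tau>} \<inter> {0..T}) t) \<partial>lebesgue_on {0..T})"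

lemma Fk_nonneg: "Fk T f \<tau> k \<ge> 0" by (simp add: Fk_def)

lemma ennreal_ind: "ennreal (a * indicator S t) = ennreal a * indicator S t"
  by (simp add: indicator_def)

lemma Fk_le:
  assumes Phi: "(\<integral>\<^sup>+ t. ennreal ((norm (f t))\<^sup>2) \<partial>lebesgue_on {0..T}) = ennreal \<Phi>"
  shows "(\<integral>\<^sup>+ t. ennreal ((norm (f t))\<^sup>2 * indicator S t) \<partial>lebesgue_on {0..T}) \<le> ennreal \<Phi>"
proof -
  have "(\<integral>\<^sup>+ t. ennreal ((norm (f t))\<^sup>2 * indicator S t) \<partial>lebesgue_on {0..T})
     \<le> (\<integral>\<^sup>+ t. ennreal ((norm (f t))\<^sup>2) \<partial>lebesgue_on {0..T})"
    by (rule nn_integral_mono) (simp add: indicator_def)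
  then show ?thesis using Phi by simp
qed

lemma Fk_eq:
  fixes f :: "real \<Rightarrow> 'a::real_normed_vector"
  assumes Phi: "(\<integral>\<^sup>+ t. ennreal ((norm (f t))\<^sup>2) \<partial>lebesgue_on {0..T}) = ennreal \<Phi>"
    and k1: "k \<ge> 1" and kT: "real k * \<tau> \<le> T" and tau: "\<tau> > 0"
  shows "(\<integral>\<^sup>+ t. ennreal ((norm (f t))\<^sup>2) \<partial>lebesgue_on {(real k - 1) * \<tau> .. real k * \<tau>}) = ennreal (Fk T f \<tau> k)"
proof -
  define S where "S = {(real k - 1) * \<tau> .. real k * \<tau>}"
  have sub: "S \<subseteq> {0..T}" unfolding S_def using k1 kT tau by auto
  then have SS: "S \<inter> {0..T} = S" "{0..T} \<inter> S = S" by auto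
  have "restrict_space (lebesgue_on {0..T}) S = restrict_space lebesgue ({0..T} \<inter> S)"
    by (rule restrict_restrict_space) (auto simp: S_def)
  then have r: "lebesgue_on S = restrict_space (lebesgue_on {0..T}) S"
    by (simp only: SS(2))
  have "(\<integral>\<^sup>+ t. ennreal ((norm (f t))\<^sup>2) \<partial>lebesgue_on S)
      = (\<integral>\<^sup>+ t. ennreal ((norm (f t))\<^sup>2) * indicator S t \<partial>lebesgue_on {0..T})"
    unfolding r by (rule nn_integral_restrict_space) (simp add: S_def SS sets_restrict_space_iff)
  also have "\<dots> = (\<integral>\<^sup>+ t. ennreal ((norm (f t))\<^sup>2 * indicator (S \<inter> {0..T}) t) \<partial>lebesgue_on {0..T})"
    by (simp add: SS ennreal_ind)
  finally have e: "(\<integral>\<^sup>+ t. ennreal ((norm (f t))\<^sup>2) \<partial>lebesgue_on S)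
      = (\<integral>\<^sup>+ t. ennreal ((norm (f t))\<^sup>2 * indicator (S \<inter> {0..T}) t) \<partial>lebesgue_on {0..T})" .
  have "(\<integral>\<^sup>+ t. ennreal ((norm (f t))\<^sup>2 * indicator (S \<inter> {0..T}) t) \<partial>lebesgue_on {0..T}) \<noteq> top"
    using Fk_le[OF Phi] by (metis ennreal_neq_top neq_top_trans)
  then show ?thesis using e unfolding Fk_def S_def by (simp add: less_top)
qed

lemma ind_sum_le2:
  assumes tau: "\<tau> > 0"
  shows "(\<Sum>k\<in>{0..N}. indicator ({(real k - 1) * \<tau> .. real k * \<tau>} \<inter> {0..T}) t) \<le> (2::real)"
proof -
  define K where "K = {0..N} \<inter> {k. t \<in> {(real k - 1) * \<tau> .. real k * \<tau>} \<inter> {0..T}}"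
  have "(\<Sum>k\<in>{0..N}. indicator ({(real k - 1) * \<tau> .. real k * \<tau>} \<inter> {0..T}) t) = (\<Sum>k\<in>K. (1::real))"
    unfolding K_def by (simp add: indicator_def sum.If_cases)
  also have "\<dots> = real (card K)" by simp
  also have "\<dots> \<le> 2"
  proof -
    define c where "c = nat \<lceil>t / \<tau>\<rceil>"
    have "K \<subseteq> {c, Suc c}"
    proof
      fix k assume "k \<in> K"
      then have t0: "t \<ge> 0" and a: "(real k - 1) * \<tau> \<le> t" and b: "t \<le> real k * \<tau>" unfolding K_def by auto
      have b': "t / \<tau> \<le> real k" using b tau by (simp add: divide_le_eq)
      have "real k * \<tau> \<le> t + \<tau>" using a by (simp add: algebra_simps)
      then have a': "real k \<le> t / \<tau> + 1" using tau by (simp add: field_simps)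
      have "\<lceil>t / \<tau>\<rceil> \<le> int k" using b' by (simp add: ceiling_le_iff)
      moreover have "int k \<le> \<lceil>t / \<tau>\<rceil> + 1" using a' le_of_int_ceiling[of "t/\<tau>"] by linarith
      moreover have "t / \<tau> \<ge> 0" using t0 tau by simp
      then have "\<lceil>t / \<tau>\<rceil> \<ge> 0" by simp
      ultimately show "k \<in> {c, Suc c}" unfolding c_def by auto
    qed
    then have "card K \<le> card {c, Suc c}" by (rule card_mono[rotated]) simp
    also have "\<dots> \<le> 2" by (simp add: card_insert_le_m1)
    finally show ?thesis by simp
  qed
  finally show ?thesis .
qed

lemma sum_Fk_le:
  fixes f :: "real \<Rightarrow> 'a::real_normed_vector"
  assumes fm: "f \<in> borel_measurable (lebesgue_on {0..T})"
    and Phi: "(\<integral>\<^sup>+ t. ennreal ((norm (f t))\<^sup>2) \<partial>lebesgue_on {0..T}) = ennreal \<Phi>" and tau: "\<tau> > 0"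
    and Phi0: "\<Phi> \<ge> 0"
  shows "(\<Sum>k\<in>{0..N}. Fk T f \<tau> k) \<le> 2 * \<Phi>"
proof -
  let ?I = "\<lambda>k. {(real k - 1) * \<tau> .. real k * \<tau>} \<inter> {0..T}"
  have fin: "(\<integral>\<^sup>+ t. ennreal ((norm (f t))\<^sup>2 * indicator (?I k) t) \<partial>lebesgue_on {0..T}) \<noteq> top" for k
    using Fk_le[OF Phi] by (metis ennreal_neq_top neq_top_trans)
  have "ennreal (\<Sum>k\<in>{0..N}. Fk T f \<tau> k) = (\<Sum>k\<in>{0..N}. ennreal (Fk T f \<tau> k))"
    by (rule sum_ennreal[symmetric]) (simp add: Fk_nonneg)
  also have "\<dots> = (\<Sum>k\<in>{0..N}. (\<integral>\<^sup>+ t. ennreal ((norm (f t))\<^sup>2 * indicator (?I k) t) \<partial>lebesgue_on {0..T}))"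
    unfolding Fk_def using fin by (simp add: less_top)
  also have "\<dots> = (\<integral>\<^sup>+ t. (\<Sum>k\<in>{0..N}. ennreal ((norm (f t))\<^sup>2 * indicator (?I k) t)) \<partial>lebesgue_on {0..T})"
    by (rule nn_integral_sum[symmetric]) (use fm in measurable)
  also have "\<dots> \<le> (\<integral>\<^sup>+ t. ennreal (2 * (norm (f t))\<^sup>2) \<partial>lebesgue_on {0..T})"
  proof (rule nn_integral_mono)
    fix t
    have "(\<Sum>k\<in>{0..N}. ennreal ((norm (f t))\<^sup>2 * indicator (?I k) t)) = ennreal (\<Sum>k\<in>{0..N}. (norm (f t))\<^sup>2 * indicator (?I k) t)"
      by (rule sum_ennreal) simp
    also have "(\<Sum>k\<in>{0..N}. (norm (f t))\<^sup>2 * indicator (?I k) t) = (norm (f t))\<^sup>2 * (\<Sum>k\<in>{0..N}. indicator (?I k) t)"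
      by (simp add: sum_distrib_left)
    also have "\<dots> \<le> (norm (f t))\<^sup>2 * 2"
      using ind_sum_le2[OF tau, where N=N and T=T and t=t] by (intro mult_left_mono) auto
    finally show "(\<Sum>k\<in>{0..N}. ennreal ((norm (f t))\<^sup>2 * indicator (?I k) t)) \<le> ennreal (2 * (norm (f t))\<^sup>2)"
      by (simp add: ennreal_leI mult.commute)
  qed
  also have "\<dots> = 2 * ennreal \<Phi>"
  proof -
    have "(\<integral>\<^sup>+ t. 2 * ennreal ((norm (f t))\<^sup>2) \<partial>lebesgue_on {0..T}) = 2 * (\<integral>\<^sup>+ t. ennreal ((norm (f t))\<^sup>2) \<partial>lebesgue_on {0..T})"
      by (rule nn_integral_cmult) (use fm in measurable)
    then show ?thesis using Phi by (simp add: ennreal_mult)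
  qed
  also have "\<dots> = ennreal (2 * \<Phi>)" using Phi0 by (simp add: ennreal_mult)
  finally show ?thesis using Phi0 by (simp add: ennreal_le_iff)
qed



lemma sqb2: fixes x y :: real shows "(x + y)\<^sup>2 \<le> 2 * x\<^sup>2 + 2 * y\<^sup>2"
proof -
  have "0 \<le> (x - y)\<^sup>2" by simp
  then show ?thesis by (auto simp: power2_eq_square algebra_simps)
qed

lemma sqb3: fixes x y z :: real shows "(x + y + z)\<^sup>2 \<le> 3 * x\<^sup>2 + 3 * y\<^sup>2 + 3 * z\<^sup>2"
proof -
  have "0 \<le> (x - y)\<^sup>2" "0 \<le> (y - z)\<^sup>2" "0 \<le> (x - z)\<^sup>2" by simp_all
  then show ?thesis by (auto simp: power2_eq_square algebra_simps)
qed

lemma sqb: fixes x y :: real shows "((3/2) * x + (1/2) * y)\<^sup>2 \<le> 5 * x\<^sup>2 + 5 * y\<^sup>2"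
proof -
  have "((3/2) * x + (1/2) * y)\<^sup>2 \<le> 2 * ((3/2) * x)\<^sup>2 + 2 * ((1/2) * y)\<^sup>2" by (rule sqb2)
  also have "\<dots> = 9/2 * x\<^sup>2 + 1/2 * y\<^sup>2" by (simp add: power_mult_distrib power2_eq_square)
  also have "\<dots> \<le> 5 * x\<^sup>2 + 5 * y\<^sup>2" using zero_le_power2[of x] zero_le_power2[of y] by linarith
  finally show ?thesis .
qed

locale rothe =
  fixes j :: "'v::real_normed_vector \<Rightarrow> 'h::real_inner"
    and A :: "'v \<Rightarrow> ('v \<Rightarrow>\<^sub>L real)" and iota :: "'v \<Rightarrow> 'u::real_normed_vector"
    and J :: "'u \<Rightarrow> real"
    and f :: "real \<Rightarrow> ('v \<Rightarrow>\<^sub>L real)" and T :: real and N :: nat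
    and u :: "nat \<Rightarrow> 'v" and xi :: "nat \<Rightarrow> ('u \<Rightarrow>\<^sub>L real)"
    and \<alpha> \<beta> d a b Ki Ce \<Phi> M0 c0 :: real
  assumes j_lin: "bounded_linear j" and iota_lin: "bounded_linear iota"
    and Ki: "\<And>v. norm (iota v) \<le> Ki * norm v" and Ki0: "Ki \<ge> 0"
    and Ce: "\<And>v. (norm (iota v))\<^sup>2 \<le> \<alpha> / (6 * d) * (norm v)\<^sup>2 + Ce * (norm (j v))\<^sup>2" and Ce0: "Ce \<ge> 0"
    and a0: "a \<ge> 0" and b0: "b > 0" and A_growth: "\<And>v. norm (A v) \<le> a + b * norm v"
    and alpha: "\<alpha> > 0" and beta: "\<beta> \<ge> 0"
    and A_coerc: "\<And>v. blinfun_apply (A v) v \<ge> \<alpha> * (norm v)\<^sup>2 - \<beta> * (norm (j v))\<^sup>2"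
    and d0: "d > 0" and J_growth: "\<And>w \<xi>. \<xi> \<in> clarke_subdiff J w \<Longrightarrow> norm \<xi> \<le> d * (1 + norm w)"
    and T0: "T > 0" and N1: "N \<ge> 1"
    and fm: "f \<in> borel_measurable (lebesgue_on {0..T})"
    and Phi: "(\<integral>\<^sup>+ t. ennreal ((norm (f t))\<^sup>2) \<partial>lebesgue_on {0..T}) = ennreal \<Phi>" and Phi0: "\<Phi> \<ge> 0"
    and sol: "rothe_solution j A iota J f T N u xi"
    and M0: "norm (j (u 0)) \<le> M0"
    and c0: "(T / real N) * (norm (u 0))\<^sup>2 \<le> c0\<^sup>2"
    and small: "(T / real N) * (\<beta> + 3 * d * Ce / 2) \<le> 1/8"
begin

definition "\<tau> = T / real N"
definition "g n = (if n = 1 then (1/\<tau>) *\<^sub>R (u 1 - u 0)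
     else (1/\<tau>) *\<^sub>R ((3/2) *\<^sub>R u n - 2 *\<^sub>R u (n - 1) + (1/2) *\<^sub>R u (n - 2)))"
definition "\<beta>' = \<beta> + 3 * d * Ce / 2"
definition "s k = sqrt ((Fk T f \<tau> k + \<tau>) / \<tau>)"
definition "\<phi> n = (3/2) * s n + (1/2) * s (n - 1)"
definition "r n = (\<phi> n)\<^sup>2 / \<alpha> + d / 2"

lemma tau0: "\<tau> > 0" unfolding \<tau>_def using T0 N1 by simp
lemma NT: "real N * \<tau> = T" unfolding \<tau>_def using N1 by simp
lemma beta'0: "\<beta>' \<ge> 0" unfolding \<beta>'_def using beta d0 Ce0 by simp
lemma small': "\<tau> * \<beta>' \<le> 1/8" using small unfolding \<tau>_def \<beta>'_def .
lemma s0: "s k \<ge> 0" unfolding s_def using tau0 Fk_nonneg[of T f \<tau> k] by simp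
lemma s2: "\<tau> * (s k)\<^sup>2 = Fk T f \<tau> k + \<tau>"
  unfolding s_def using tau0 Fk_nonneg[of T f \<tau> k] by simp
lemma phi0: "\<phi> n \<ge> 0" unfolding \<phi>_def using s0 by (simp add: add_nonneg_nonneg)
lemma r0: "r n \<ge> 0" unfolding r_def using alpha d0 by simp

lemma eqn:
  assumes n: "n \<in> {1..N}"
  shows "inner (j (g n)) (j v) + blinfun_apply (A (u n)) v + blinfun_apply (xi n) (iota v) = ftau T f N n v"
    and "xi n \<in> clarke_subdiff J (iota (u n))"
proof -
  have sc: "inner (j ((1/\<tau>) *\<^sub>R x)) (j v) = inner (j x) (j v) / \<tau>" for x
    using linear_simps(5)[OF j_lin] by (simp add: divide_inverse mult.commute)
  note S = sol[unfolded rothe_solution_def Let_def \<tau>_def[symmetric]]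
  show "inner (j (g n)) (j v) + blinfun_apply (A (u n)) v + blinfun_apply (xi n) (iota v) = ftau T f N n v"
  proof (cases "n = 1")
    case True
    then show ?thesis using S unfolding g_def by (auto simp: sc)
  next
    case False
    then have "n \<in> {2..N}" using n by auto
    then show ?thesis using S False unfolding g_def by (auto simp: sc)
  qed
  show "xi n \<in> clarke_subdiff J (iota (u n))"
  proof (cases "n = 1")
    case True
    then show ?thesis using S by auto
  next
    case False
    then have "n \<in> {2..N}" using n by auto
    then show ?thesis using S by auto
  qed
qed

lemma xi_bound:
  assumes n: "n \<in> {1..N}"
  shows "norm (xi n) \<le> d * (1 + Ki * norm (u n))"
proof -
  have "norm (xi n) \<le> d * (1 + norm (iota (u n)))" using J_growth eqn(2)[OF n] by blast
  also have "\<dots> \<le> d * (1 + Ki * norm (u n))" using Ki[of "u n"] d0 by (simp add: mult_left_mono)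
  finally show ?thesis .
qed

lemma int_k:
  assumes k: "k \<in> {1..N}"
  shows "\<bar>\<integral>t. blinfun_apply (f t) v \<partial>lebesgue_on {(real k - 1) * \<tau> .. real k * \<tau>}\<bar> \<le> norm v * (\<tau> * s k)"
proof -
  have kT: "real k * \<tau> \<le> T" using k NT tau0 by (metis atLeastAtMost_iff mult_right_mono of_nat_le_iff less_imp_le)
  have sub: "{(real k - 1) * \<tau> .. real k * \<tau>} \<subseteq> {0..T}" using k kT tau0 by auto
  have FS: "(\<integral>\<^sup>+ t. ennreal ((norm (f t))\<^sup>2) \<partial>lebesgue_on {(real k - 1) * \<tau> .. real k * \<tau>}) = ennreal (Fk T f \<tau> k)"
    by (rule Fk_eq[OF Phi]) (use k kT tau0 in auto)
  have "\<bar>\<integral>t. blinfun_apply (f t) v \<partial>lebesgue_on {(real k - 1) * \<tau> .. real k * \<tau>}\<bar>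
     \<le> norm v * ((real k * \<tau> - (real k - 1) * \<tau>) * sqrt ((Fk T f \<tau> k + (real k * \<tau> - (real k - 1) * \<tau>)) / (real k * \<tau> - (real k - 1) * \<tau>)))"
    by (rule int_bound[OF fm sub _ FS Fk_nonneg]) (use tau0 in simp)
  also have "\<dots> = norm v * (\<tau> * s k)" unfolding s_def by (simp add: algebra_simps)
  finally show ?thesis .
qed

lemma ftau_bound:
  assumes n: "n \<in> {1..N}"
  shows "\<bar>ftau T f N n v\<bar> \<le> \<phi> n * norm v"
proof (cases "n = 1")
  case True
  have "ftau T f N n v = (1 / \<tau>) * (\<integral>t. blinfun_apply (f t) v \<partial>lebesgue_on {(real 1 - 1) * \<tau> .. real 1 * \<tau>})"
    unfolding ftau_def Let_def \<tau>_def[symmetric] using True by simp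
  also have "\<bar>\<dots>\<bar> \<le> s 1 * norm v"
  proof -
    have "\<bar>\<integral>t. blinfun_apply (f t) v \<partial>lebesgue_on {(real 1 - 1) * \<tau> .. real 1 * \<tau>}\<bar> / \<tau> \<le> (norm v * (\<tau> * s 1)) / \<tau>"
      by (rule divide_right_mono[OF int_k]) (use N1 tau0 in auto)
    then show ?thesis using tau0 by (simp add: abs_mult mult.commute)
  qed
  also have "\<dots> \<le> \<phi> n * norm v" unfolding \<phi>_def True using s0[of 0] s0[of 1]
    by (intro mult_right_mono) auto
  finally show ?thesis .
next
  case False
  then have n2: "n \<ge> 2" using n by auto
  have eq: "{(real n - 2) * \<tau> .. (real n - 1) * \<tau>} = {(real (n - 1) - 1) * \<tau> .. real (n - 1) * \<tau>}"
    using n2 by (simp add: of_nat_diff algebra_simps)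
  define I1 where "I1 = (\<integral>t. blinfun_apply (f t) v \<partial>lebesgue_on {(real n - 1) * \<tau> .. real n * \<tau>})"
  define I2 where "I2 = (\<integral>t. blinfun_apply (f t) v \<partial>lebesgue_on {(real (n - 1) - 1) * \<tau> .. real (n - 1) * \<tau>})"
  have e0: "ftau T f N n v = (3 / (2 * \<tau>)) * I1 - (1 / (2 * \<tau>)) * (\<integral>t. blinfun_apply (f t) v \<partial>lebesgue_on {(real n - 2) * \<tau> .. (real n - 1) * \<tau>})"
    unfolding ftau_def Let_def \<tau>_def[symmetric] I1_def using False by simp
  have "ftau T f N n v = (3 / (2 * \<tau>)) * I1 - (1 / (2 * \<tau>)) * I2"
    by (simp only: e0 I2_def eq)
  also have "\<bar>\<dots>\<bar> \<le> \<bar>(3 / (2 * \<tau>)) * I1\<bar> + \<bar>(1 / (2 * \<tau>)) * I2\<bar>"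
    by (rule abs_triangle_ineq4)
  also have "\<dots> = (3 / (2 * \<tau>)) * \<bar>I1\<bar> + (1 / (2 * \<tau>)) * \<bar>I2\<bar>"
    using tau0 by (simp add: abs_mult)
  also have "\<dots> \<le> (3 / (2 * \<tau>)) * (norm v * (\<tau> * s n)) + (1 / (2 * \<tau>)) * (norm v * (\<tau> * s (n - 1)))"
  proof -
    have "\<bar>I1\<bar> \<le> norm v * (\<tau> * s n)" unfolding I1_def by (rule int_k[OF n])
    moreover have "\<bar>I2\<bar> \<le> norm v * (\<tau> * s (n - 1))" unfolding I2_def by (rule int_k) (use n n2 in auto)
    ultimately show ?thesis using tau0 by (intro add_mono mult_left_mono) auto
  qed
  also have "\<dots> = \<phi> n * norm v" unfolding \<phi>_def using tau0 by (simp add: field_simps)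
  finally show ?thesis .
qed

lemma sum_phi: "\<tau> * (\<Sum>n\<in>{1..N}. (\<phi> n)\<^sup>2) \<le> 20 * \<Phi> + 20 * T"
proof -
  define H where "H k = Fk T f \<tau> k + \<tau>" for k
  have H0: "H k \<ge> 0" for k unfolding H_def using Fk_nonneg[of T f \<tau> k] tau0 by simp
  have p: "\<tau> * (\<phi> n)\<^sup>2 \<le> 5 * H n + 5 * H (n - 1)" for n
  proof -
    have "(\<phi> n)\<^sup>2 \<le> 5 * (s n)\<^sup>2 + 5 * (s (n - 1))\<^sup>2"
      unfolding \<phi>_def by (rule sqb)
    then have "\<tau> * (\<phi> n)\<^sup>2 \<le> \<tau> * (5 * (s n)\<^sup>2 + 5 * (s (n - 1))\<^sup>2)" using tau0 by simp
    also have "\<dots> = 5 * (\<tau> * (s n)\<^sup>2) + 5 * (\<tau> * (s (n - 1))\<^sup>2)" by (simp add: algebra_simps)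
    finally show ?thesis unfolding H_def s2 .
  qed
  have "\<tau> * (\<Sum>n\<in>{1..N}. (\<phi> n)\<^sup>2) = (\<Sum>n\<in>{1..N}. \<tau> * (\<phi> n)\<^sup>2)" by (simp add: sum_distrib_left)
  also have "\<dots> \<le> (\<Sum>n\<in>{1..N}. 5 * H n + 5 * H (n - 1))" by (rule sum_mono) (rule p)
  also have "\<dots> = 5 * (\<Sum>n\<in>{1..N}. H n) + 5 * (\<Sum>n\<in>{1..N}. H (n - 1))"
    by (simp add: sum.distrib sum_distrib_left)
  also have "\<dots> \<le> 5 * (\<Sum>k\<in>{0..N}. H k) + 5 * (\<Sum>k\<in>{0..N}. H k)"
  proof -
    have "(\<Sum>n\<in>{1..N}. H n) \<le> (\<Sum>k\<in>{0..N}. H k)" by (rule sum_mono2) (auto simp: H0)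
    moreover have "(\<Sum>n\<in>{1..N}. H (n - 1)) \<le> (\<Sum>k\<in>{0..N}. H k)" by (rule sum_shift1_le) (rule H0)
    ultimately show ?thesis by simp
  qed
  also have "(\<Sum>k\<in>{0..N}. H k) = (\<Sum>k\<in>{0..N}. Fk T f \<tau> k) + real (Suc N) * \<tau>"
    unfolding H_def by (simp add: sum.distrib)
  also have "\<dots> \<le> 2 * \<Phi> + 2 * T"
  proof -
    have "(\<Sum>k\<in>{0..N}. Fk T f \<tau> k) \<le> 2 * \<Phi>" by (rule sum_Fk_le[OF fm Phi tau0 Phi0])
    moreover have "real (Suc N) * \<tau> \<le> 2 * T" using NT N1 tau0
      by (smt (verit) mult_left_mono of_nat_1 of_nat_Suc of_nat_le_iff mult_right_mono distrib_right)
    ultimately show ?thesis by simp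
  qed
  finally show ?thesis by simp
qed

end



lemma amgm: fixes p q \<alpha> :: real assumes "\<alpha> > 0" shows "p * q \<le> p\<^sup>2 / \<alpha> + \<alpha> / 4 * q\<^sup>2"
proof -
  have "0 \<le> (p - \<alpha> / 2 * q)\<^sup>2" by simp
  then have "\<alpha> * (p * q) \<le> p\<^sup>2 + \<alpha>\<^sup>2 / 4 * q\<^sup>2" by (simp add: power2_eq_square algebra_simps)
  then have "\<alpha> * (p * q) \<le> \<alpha> * (p\<^sup>2 / \<alpha> + \<alpha> / 4 * q\<^sup>2)" using assms by (simp add: algebra_simps power2_eq_square)
  then show ?thesis using assms by (simp add: mult_le_cancel_left_pos)
qed

lemma id1: fixes x y :: "'a::real_inner"
  shows "2 * inner (x - y) x = (norm x)\<^sup>2 - (norm y)\<^sup>2 + (norm (x - y))\<^sup>2"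
  by (simp add: power2_norm_eq_inner inner_diff_left inner_diff_right inner_commute algebra_simps)

lemma id2: fixes x y z :: "'a::real_inner"
  shows "4 * inner ((3/2) *\<^sub>R x - 2 *\<^sub>R y + (1/2) *\<^sub>R z) x
    = (norm x)\<^sup>2 + (norm (2 *\<^sub>R x - y))\<^sup>2 - (norm y)\<^sup>2 - (norm (2 *\<^sub>R y - z))\<^sup>2 + (norm (x - 2 *\<^sub>R y + z))\<^sup>2"
  by (simp add: power2_norm_eq_inner inner_diff_left inner_diff_right inner_add_left inner_add_right
      inner_commute algebra_simps)

context rothe begin

definition "aa k = j (u k)"
definition "E k = (norm (aa k))\<^sup>2 + (norm (2 *\<^sub>R aa k - aa (k - 1)))\<^sup>2"
definition "R4 = 4 * \<tau> * (\<Sum>n\<in>{1..N}. r n)"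
definition "R4b = (4 / \<alpha>) * (20 * \<Phi> + 20 * T) + 2 * d * T"
definition "Bb = 20 * M0\<^sup>2 + 10 * R4b"
definition "Eb = 2 * Bb * exp (8 * \<beta>' * T)"
definition "Vb = (M0\<^sup>2 + R4b) / \<alpha> + (Bb + 4 * \<beta>' * T * Eb) / (2 * \<alpha>)"

lemma E0: "E k \<ge> 0" unfolding E_def by simp
lemma M00: "M0 \<ge> 0" using M0 norm_ge_zero order_trans by blast

lemma energy:
  assumes n: "n \<in> {1..N}"
  shows "inner (j (g n)) (j (u n)) + \<alpha> / 2 * (norm (u n))\<^sup>2 \<le> r n + \<beta>' * (norm (j (u n)))\<^sup>2"
proof -
  define x where "x = u n"
  define nx where "nx = norm x"
  define nj where "nj = norm (j x)"
  define ni where "ni = norm (iota x)"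
  have e: "inner (j (g n)) (j x) = ftau T f N n x - blinfun_apply (A x) x - blinfun_apply (xi n) (iota x)"
    using eqn(1)[OF n, of x] unfolding x_def by linarith
  have f1: "ftau T f N n x \<le> \<phi> n * nx" using ftau_bound[OF n, of x] unfolding nx_def by linarith
  have f2: "\<phi> n * nx \<le> (\<phi> n)\<^sup>2 / \<alpha> + \<alpha> / 4 * nx\<^sup>2" by (rule amgm[OF alpha])
  have f3: "- blinfun_apply (A x) x \<le> - \<alpha> * nx\<^sup>2 + \<beta> * nj\<^sup>2" using A_coerc[of x] unfolding nx_def nj_def by linarith
  have xin: "norm (xi n) \<le> d * (1 + ni)" using J_growth eqn(2)[OF n] unfolding ni_def x_def by blast
  have f4: "- blinfun_apply (xi n) (iota x) \<le> d * (1 + ni) * ni"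
  proof -
    have "- blinfun_apply (xi n) (iota x) \<le> norm (blinfun_apply (xi n) (iota x))" by simp
    also have "\<dots> \<le> norm (xi n) * ni" unfolding ni_def by (rule norm_blinfun)
    also have "\<dots> \<le> d * (1 + ni) * ni" using xin unfolding ni_def by (simp add: mult_right_mono)
    finally show ?thesis .
  qed
  have f5: "d * (1 + ni) * ni \<le> d / 2 + 3 * d / 2 * ni\<^sup>2"
  proof -
    have "0 \<le> (ni - 1)\<^sup>2" by simp
    then have "0 \<le> ni\<^sup>2 - 2 * ni + 1" by (simp add: power2_diff)
    then have "ni \<le> 1/2 + ni\<^sup>2 / 2" by linarith
    then have "d * ni \<le> d * (1/2 + ni\<^sup>2 / 2)" using d0 by (simp add: mult_left_mono)
    then show ?thesis by (simp add: algebra_simps power2_eq_square)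
  qed
  have f6: "3 * d / 2 * ni\<^sup>2 \<le> \<alpha> / 4 * nx\<^sup>2 + 3 * d * Ce / 2 * nj\<^sup>2"
  proof -
    have "3 * d / 2 * ni\<^sup>2 \<le> 3 * d / 2 * (\<alpha> / (6 * d) * nx\<^sup>2 + Ce * nj\<^sup>2)"
      using Ce[of x] d0 unfolding ni_def nx_def nj_def by (simp add: mult_left_mono)
    also have "\<dots> = \<alpha> / 4 * nx\<^sup>2 + 3 * d * Ce / 2 * nj\<^sup>2" using d0 by (simp add: field_simps)
    finally show ?thesis .
  qed
  have "inner (j (g n)) (j x) \<le> r n - \<alpha> / 2 * nx\<^sup>2 + \<beta>' * nj\<^sup>2"
    using e f1 f2 f3 f4 f5 f6 unfolding r_def \<beta>'_def by (simp add: algebra_simps)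
  then show ?thesis unfolding x_def nx_def nj_def by simp
qed

lemma tg1: "\<tau> *\<^sub>R g 1 = u 1 - u 0" unfolding g_def using tau0 by simp
lemma tg2: "n \<ge> 2 \<Longrightarrow> \<tau> *\<^sub>R g n = (3/2) *\<^sub>R u n - 2 *\<^sub>R u (n - 1) + (1/2) *\<^sub>R u (n - 2)"
  unfolding g_def using tau0 by simp

lemma jg: "\<tau> * inner (j (g n)) y = inner (j (\<tau> *\<^sub>R g n)) y"
  using linear_simps(5)[OF j_lin] by simp

lemma I1: "(norm (aa 1))\<^sup>2 - (norm (aa 0))\<^sup>2 + \<alpha> * \<tau> * (norm (u 1))\<^sup>2 \<le> 2 * \<tau> * r 1 + 2 * \<tau> * \<beta>' * (norm (aa 1))\<^sup>2"
proof -
  have en: "inner (j (g 1)) (aa 1) + \<alpha> / 2 * (norm (u 1))\<^sup>2 \<le> r 1 + \<beta>' * (norm (aa 1))\<^sup>2"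
    using energy[of 1] N1 unfolding aa_def by simp
  have "2 * \<tau> * inner (j (g 1)) (aa 1) = 2 * inner (aa 1 - aa 0) (aa 1)"
    using jg[of 1 "aa 1"] tg1 unfolding aa_def by (simp add: linear_simps(2)[OF j_lin])
  also have "\<dots> = (norm (aa 1))\<^sup>2 - (norm (aa 0))\<^sup>2 + (norm (aa 1 - aa 0))\<^sup>2" by (rule id1)
  finally have i: "2 * \<tau> * inner (j (g 1)) (aa 1) \<ge> (norm (aa 1))\<^sup>2 - (norm (aa 0))\<^sup>2" by simp
  have "2 * \<tau> * (inner (j (g 1)) (aa 1) + \<alpha> / 2 * (norm (u 1))\<^sup>2) \<le> 2 * \<tau> * (r 1 + \<beta>' * (norm (aa 1))\<^sup>2)"
    using en tau0 by simp
  then show ?thesis using i by (simp add: algebra_simps)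
qed

lemma In:
  assumes n: "n \<in> {2..N}"
  shows "E n - E (n - 1) + 2 * \<alpha> * \<tau> * (norm (u n))\<^sup>2 \<le> 4 * \<tau> * r n + 4 * \<tau> * \<beta>' * (norm (aa n))\<^sup>2"
proof -
  have n1: "n \<in> {1..N}" and n2: "n \<ge> 2" using n by auto
  have en: "inner (j (g n)) (aa n) + \<alpha> / 2 * (norm (u n))\<^sup>2 \<le> r n + \<beta>' * (norm (aa n))\<^sup>2"
    using energy[OF n1] unfolding aa_def by simp
  have "4 * \<tau> * inner (j (g n)) (aa n) = 4 * inner ((3/2) *\<^sub>R aa n - 2 *\<^sub>R aa (n - 1) + (1/2) *\<^sub>R aa (n - 2)) (aa n)"
    using jg[of n "aa n"] tg2[OF n2] unfolding aa_def by (simp add: linear_simps[OF j_lin])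
  also have "\<dots> = (norm (aa n))\<^sup>2 + (norm (2 *\<^sub>R aa n - aa (n - 1)))\<^sup>2 - (norm (aa (n - 1)))\<^sup>2
      - (norm (2 *\<^sub>R aa (n - 1) - aa (n - 2)))\<^sup>2 + (norm (aa n - 2 *\<^sub>R aa (n - 1) + aa (n - 2)))\<^sup>2"
    by (rule id2)
  finally have i: "4 * \<tau> * inner (j (g n)) (aa n) \<ge> E n - E (n - 1)"
    unfolding E_def using n2 by (simp add: numeral_2_eq_2)
  have "4 * \<tau> * (inner (j (g n)) (aa n) + \<alpha> / 2 * (norm (u n))\<^sup>2) \<le> 4 * \<tau> * (r n + \<beta>' * (norm (aa n))\<^sup>2)"
    using en tau0 by simp
  then show ?thesis using i by (simp add: algebra_simps)
qed

lemma tele: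
  "m \<in> {1..N} \<Longrightarrow> E m + 2 * \<alpha> * \<tau> * (\<Sum>n\<in>{2..m}. (norm (u n))\<^sup>2)
     \<le> E 1 + (\<Sum>n\<in>{2..m}. 4 * \<tau> * r n + 4 * \<tau> * \<beta>' * (norm (aa n))\<^sup>2)"
proof (induction m)
  case 0
  then show ?case by simp
next
  case (Suc m)
  show ?case
  proof (cases "m = 0")
    case True
    then show ?thesis by simp
  next
    case False
    then have m1: "m \<in> {1..N}" using Suc.prems by auto
    have s1: "(\<Sum>n\<in>{2..Suc m}. (norm (u n))\<^sup>2) = (\<Sum>n\<in>{2..m}. (norm (u n))\<^sup>2) + (norm (u (Suc m)))\<^sup>2"
      using False by simp
    have s2: "(\<Sum>n\<in>{2..Suc m}. 4 * \<tau> * r n + 4 * \<tau> * \<beta>' * (norm (aa n))\<^sup>2)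
        = (\<Sum>n\<in>{2..m}. 4 * \<tau> * r n + 4 * \<tau> * \<beta>' * (norm (aa n))\<^sup>2) + (4 * \<tau> * r (Suc m) + 4 * \<tau> * \<beta>' * (norm (aa (Suc m)))\<^sup>2)"
      using False by simp
    have sm: "Suc m \<in> {2..N}" using Suc.prems False by auto
    have "E (Suc m) - E m + 2 * \<alpha> * \<tau> * (norm (u (Suc m)))\<^sup>2 \<le> 4 * \<tau> * r (Suc m) + 4 * \<tau> * \<beta>' * (norm (aa (Suc m)))\<^sup>2"
      using In[OF sm] by simp
    then show ?thesis using Suc.IH[OF m1] unfolding s1 s2 by (simp add: algebra_simps)
  qed
qed


lemma R4_le: "R4 \<le> R4b"
proof -
  have "(\<Sum>n\<in>{1..N}. r n) = (\<Sum>n\<in>{1..N}. (\<phi> n)\<^sup>2) / \<alpha> + real N * (d / 2)"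
    unfolding r_def by (simp add: sum.distrib sum_divide_distrib)
  then have "R4 = (4 / \<alpha>) * (\<tau> * (\<Sum>n\<in>{1..N}. (\<phi> n)\<^sup>2)) + 2 * d * (real N * \<tau>)"
    unfolding R4_def by (simp add: algebra_simps)
  also have "\<dots> \<le> (4 / \<alpha>) * (20 * \<Phi> + 20 * T) + 2 * d * T"
  proof -
    have "(4 / \<alpha>) * (\<tau> * (\<Sum>n\<in>{1..N}. (\<phi> n)\<^sup>2)) \<le> (4 / \<alpha>) * (20 * \<Phi> + 20 * T)"
      using sum_phi alpha by (intro mult_left_mono) auto
    then show ?thesis unfolding NT by linarith
  qed
  finally show ?thesis unfolding R4b_def .
qed

lemma r1_le: "4 * \<tau> * r 1 \<le> R4"
proof -
  have "r 1 \<le> (\<Sum>n\<in>{1..N}. r n)" using N1 r0 by (intro member_le_sum) auto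
  then show ?thesis unfolding R4_def using tau0 by simp
qed

lemma R40: "R4 \<ge> 0" unfolding R4_def using tau0 r0 by (simp add: sum_nonneg)

lemma a1_le: "(norm (aa 1))\<^sup>2 \<le> 2 * M0\<^sup>2 + 4 * \<tau> * r 1"
proof -
  define X where "X = (norm (aa 1))\<^sup>2"
  have X0: "X \<ge> 0" unfolding X_def by simp
  define Y where "Y = \<tau> * \<beta>' * X"
  define Z where "Z = \<tau> * r 1"
  define W where "W = \<alpha> * \<tau> * (norm (u 1))\<^sup>2"
  have "Y \<le> (1/8) * X" unfolding Y_def using small' X0 by (rule mult_right_mono)
  moreover have "(norm (aa 0))\<^sup>2 \<le> M0\<^sup>2" using M0 unfolding aa_def by (simp add: power_mono)
  moreover have "W \<ge> 0" unfolding W_def using alpha tau0 by simp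
  moreover have "Z \<ge> 0" unfolding Z_def using tau0 r0 by simp
  moreover have "X - (norm (aa 0))\<^sup>2 + W \<le> 2 * Z + 2 * Y"
    using I1 unfolding X_def Y_def Z_def W_def by (simp add: algebra_simps)
  moreover have "4 * \<tau> * r 1 = 4 * Z" unfolding Z_def by simp
  moreover have "0 \<le> M0\<^sup>2" by simp
  ultimately show ?thesis unfolding X_def by linarith
qed

lemma E1_le: "E 1 \<le> 20 * M0\<^sup>2 + 9 * R4"
proof -
  have "norm (2 *\<^sub>R aa 1 - aa 0) \<le> 2 * norm (aa 1) + norm (aa 0)"
    using norm_triangle_ineq4[of "2 *\<^sub>R aa 1" "aa 0"] by simp
  then have "(norm (2 *\<^sub>R aa 1 - aa 0))\<^sup>2 \<le> (2 * norm (aa 1) + norm (aa 0))\<^sup>2"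
    by (simp add: power_mono)
  also have "\<dots> \<le> 2 * (2 * norm (aa 1))\<^sup>2 + 2 * (norm (aa 0))\<^sup>2" by (rule sqb2)
  also have "\<dots> = 8 * (norm (aa 1))\<^sup>2 + 2 * (norm (aa 0))\<^sup>2" by (simp add: power_mult_distrib)
  finally have "E 1 \<le> 9 * (norm (aa 1))\<^sup>2 + 2 * (norm (aa 0))\<^sup>2" unfolding E_def by simp
  moreover have "(norm (aa 0))\<^sup>2 \<le> M0\<^sup>2" using M0 unfolding aa_def by (simp add: power_mono)
  ultimately show ?thesis using a1_le r1_le by linarith
qed

lemma recE:
  assumes m: "m \<in> {1..N}"
  shows "E m \<le> (20 * M0\<^sup>2 + 10 * R4) + (4 * \<tau> * \<beta>') * (\<Sum>n\<in>{1..m}. E n)"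
proof -
  have s1: "(\<Sum>n\<in>{2..m}. 4 * \<tau> * r n + 4 * \<tau> * \<beta>' * (norm (aa n))\<^sup>2)
      = (\<Sum>n\<in>{2..m}. 4 * \<tau> * r n) + (4 * \<tau> * \<beta>') * (\<Sum>n\<in>{2..m}. (norm (aa n))\<^sup>2)"
    by (simp add: sum.distrib sum_distrib_left mult.assoc)
  have s2: "(\<Sum>n\<in>{2..m}. 4 * \<tau> * r n) \<le> R4"
  proof -
    have "(\<Sum>n\<in>{2..m}. r n) \<le> (\<Sum>n\<in>{1..N}. r n)" using m r0 by (intro sum_mono2) auto
    then show ?thesis unfolding R4_def using tau0 by (simp add: sum_distrib_left[symmetric])
  qed
  have s3: "(\<Sum>n\<in>{2..m}. (norm (aa n))\<^sup>2) \<le> (\<Sum>n\<in>{1..m}. E n)"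
  proof -
    have "(\<Sum>n\<in>{2..m}. (norm (aa n))\<^sup>2) \<le> (\<Sum>n\<in>{2..m}. E n)" unfolding E_def by (rule sum_mono) simp
    also have "\<dots> \<le> (\<Sum>n\<in>{1..m}. E n)" using E0 by (intro sum_mono2) auto
    finally show ?thesis .
  qed
  have q0: "4 * \<tau> * \<beta>' \<ge> 0" using tau0 beta'0 by simp
  have "(4 * \<tau> * \<beta>') * (\<Sum>n\<in>{2..m}. (norm (aa n))\<^sup>2) \<le> (4 * \<tau> * \<beta>') * (\<Sum>n\<in>{1..m}. E n)"
    using s3 q0 by (rule mult_left_mono)
  moreover have "2 * \<alpha> * \<tau> * (\<Sum>n\<in>{2..m}. (norm (u n))\<^sup>2) \<ge> 0" using alpha tau0 by (simp add: sum_nonneg)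
  ultimately show ?thesis using tele[OF m] s1 s2 E1_le by linarith
qed

lemma E_le:
  assumes m: "m \<in> {1..N}"
  shows "E m \<le> Eb"
proof -
  define q where "q = 4 * \<tau> * \<beta>'"
  define B where "B = 20 * M0\<^sup>2 + 10 * R4"
  have q0: "q \<ge> 0" unfolding q_def using tau0 beta'0 by simp
  have q1: "q \<le> 1/2" unfolding q_def using small' by simp
  have B0: "B \<ge> 0" unfolding B_def using R40 by simp
  have rec': "\<And>m. m \<in> {1..N} \<Longrightarrow> E m \<le> B + q * (\<Sum>n\<in>{1..m}. E n)"
    using recE unfolding q_def B_def by blast
  have "E m \<le> 2 * B * (1 + 2 * q) ^ m"
    by (rule dgronwall[OF q0 q1 B0 E0 rec' m])
  also have "\<dots> \<le> 2 * B * (1 + 2 * q) ^ N"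
    using m q0 B0 by (intro mult_left_mono power_increasing) auto
  also have "(1 + 2 * q) ^ N \<le> exp (2 * q) ^ N"
    using q0 by (intro power_mono) (auto simp: exp_ge_add_one_self_aux add.commute)
  also have "exp (2 * q) ^ N = exp (8 * \<beta>' * T)"
    unfolding q_def using NT by (simp add: exp_of_nat_mult[symmetric] algebra_simps)
  finally have "E m \<le> 2 * B * exp (8 * \<beta>' * T)" using B0 by (simp add: mult_left_mono)
  also have "\<dots> \<le> Eb" unfolding Eb_def Bb_def B_def using R4_le by simp
  finally show ?thesis .
qed

lemma aa_le:
  assumes k: "k \<in> {0..N}"
  shows "(norm (aa k))\<^sup>2 \<le> M0\<^sup>2 + Eb"
proof (cases "k = 0")
  case True
  then show ?thesis using M0 E_le[of 1] N1 E0[of 1] unfolding aa_def by (simp add: power_mono add_increasing2)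
next
  case False
  then have "(norm (aa k))\<^sup>2 \<le> E k" unfolding E_def by simp
  also have "\<dots> \<le> Eb" using E_le k False by auto
  finally show ?thesis by (simp add: add_increasing)
qed

lemma Vsum: "\<tau> * (\<Sum>n\<in>{1..N}. (norm (u n))\<^sup>2) \<le> Vb"
proof -
  have Eb0: "Eb \<ge> 0" using E_le[of 1] N1 E0[of 1] by simp
  have a: "2 * \<alpha> * \<tau> * (\<Sum>n\<in>{2..N}. (norm (u n))\<^sup>2) \<le> Bb + 4 * \<beta>' * T * Eb"
  proof -
    have b: "(\<Sum>n\<in>{2..N}. 4 * \<tau> * r n + 4 * \<tau> * \<beta>' * (norm (aa n))\<^sup>2)
        \<le> R4 + (4 * \<tau> * \<beta>') * (\<Sum>n\<in>{2..N}. Eb)"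
    proof -
      have "(\<Sum>n\<in>{2..N}. 4 * \<tau> * r n + 4 * \<tau> * \<beta>' * (norm (aa n))\<^sup>2)
          = (\<Sum>n\<in>{2..N}. 4 * \<tau> * r n) + (4 * \<tau> * \<beta>') * (\<Sum>n\<in>{2..N}. (norm (aa n))\<^sup>2)"
        by (simp add: sum.distrib sum_distrib_left mult.assoc)
      moreover have "(\<Sum>n\<in>{2..N}. 4 * \<tau> * r n) \<le> R4"
      proof -
        have "(\<Sum>n\<in>{2..N}. r n) \<le> (\<Sum>n\<in>{1..N}. r n)" using r0 by (intro sum_mono2) auto
        then show ?thesis unfolding R4_def using tau0 by (simp add: sum_distrib_left[symmetric])
      qed
      moreover have "(\<Sum>n\<in>{2..N}. (norm (aa n))\<^sup>2) \<le> (\<Sum>n\<in>{2..N}. Eb)"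
      proof (rule sum_mono)
        fix n assume "n \<in> {2..N}"
        then have "E n \<le> Eb" using E_le by auto
        moreover have "(norm (aa n))\<^sup>2 \<le> E n" by (simp add: E_def)
        ultimately show "(norm (aa n))\<^sup>2 \<le> Eb" by linarith
      qed
      then have "(4 * \<tau> * \<beta>') * (\<Sum>n\<in>{2..N}. (norm (aa n))\<^sup>2) \<le> (4 * \<tau> * \<beta>') * (\<Sum>n\<in>{2..N}. Eb)"
        using tau0 beta'0 by (intro mult_left_mono) auto
      ultimately show ?thesis by linarith
    qed
    have c: "(4 * \<tau> * \<beta>') * (\<Sum>n\<in>{2..N}. Eb) \<le> 4 * \<beta>' * T * Eb"
    proof -
      have "(\<Sum>n\<in>{2..N}. Eb) = real (N - 1) * Eb" by simp
      also have "\<dots> \<le> real N * Eb" using Eb0 by (intro mult_right_mono) auto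
      finally have "(4 * \<tau> * \<beta>') * (\<Sum>n\<in>{2..N}. Eb) \<le> (4 * \<tau> * \<beta>') * (real N * Eb)"
        using tau0 beta'0 by (intro mult_left_mono) auto
      also have "\<dots> = 4 * \<beta>' * (real N * \<tau>) * Eb" by (simp add: algebra_simps)
      finally show ?thesis using NT by simp
    qed
    have "N \<in> {1..N}" using N1 by simp
    from tele[OF this] b c E1_le E0[of N] R4_le R40 show ?thesis unfolding Bb_def by linarith
  qed
  have b: "\<tau> * (norm (u 1))\<^sup>2 \<le> (M0\<^sup>2 + R4b) / \<alpha>"
  proof -
    define X where "X = (norm (aa 1))\<^sup>2"
    define Y where "Y = \<tau> * \<beta>' * X"
    define Z where "Z = \<tau> * r 1"
    define W where "W = \<alpha> * (\<tau> * (norm (u 1))\<^sup>2)"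
    have "Y \<le> (1/8) * X" unfolding Y_def using small' by (rule mult_right_mono) (simp add: X_def)
    moreover have "(norm (aa 0))\<^sup>2 \<le> M0\<^sup>2" using M0 unfolding aa_def by (simp add: power_mono)
    moreover have "X - (norm (aa 0))\<^sup>2 + W \<le> 2 * Z + 2 * Y"
      using I1 unfolding X_def Y_def Z_def W_def by (simp add: algebra_simps)
    moreover have "4 * Z \<le> R4" using r1_le unfolding Z_def by simp
    moreover have "X \<ge> 0" unfolding X_def by simp
    moreover have "Z \<ge> 0" unfolding Z_def using tau0 r0 by simp
    ultimately have "W \<le> M0\<^sup>2 + R4" by linarith
    then have "\<alpha> * (\<tau> * (norm (u 1))\<^sup>2) \<le> M0\<^sup>2 + R4" unfolding W_def .
    then have "\<alpha> * (\<tau> * (norm (u 1))\<^sup>2) \<le> M0\<^sup>2 + R4b" using R4_le by linarith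
    then show ?thesis using alpha by (simp add: field_simps)
  qed
  have "\<tau> * (\<Sum>n\<in>{1..N}. (norm (u n))\<^sup>2) = \<tau> * (norm (u 1))\<^sup>2 + \<tau> * (\<Sum>n\<in>{2..N}. (norm (u n))\<^sup>2)"
    using N1 by (simp add: sum.atLeast_Suc_atMost numeral_2_eq_2 algebra_simps)
  also have "\<dots> \<le> (M0\<^sup>2 + R4b) / \<alpha> + (Bb + 4 * \<beta>' * T * Eb) / (2 * \<alpha>)"
  proof -
    have "\<tau> * (\<Sum>n\<in>{2..N}. (norm (u n))\<^sup>2) \<le> (Bb + 4 * \<beta>' * T * Eb) / (2 * \<alpha>)"
      using a alpha by (simp add: field_simps)
    then show ?thesis using b by linarith
  qed
  finally show ?thesis unfolding Vb_def .
qed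

end


lemma convex_sq: fixes p q :: real shows "(p / 3 + 2 * q / 3)\<^sup>2 \<le> p\<^sup>2 / 3 + 2 * q\<^sup>2 / 3"
proof -
  have "0 \<le> (p - q)\<^sup>2" by simp
  then show ?thesis by (auto simp: power2_eq_square algebra_simps)
qed

context rothe begin

definition "Gb = 3 * ((20 * \<Phi> + 20 * T) + (a + Ki * d)\<^sup>2 * T + (b + Ki\<^sup>2 * d)\<^sup>2 * Vb)"
definition "Xb = 2 * d\<^sup>2 * T + 2 * d\<^sup>2 * Ki\<^sup>2 * Vb"
definition "Gn n = norm (toVs j (g n))"

lemma g_dual:
  assumes n: "n \<in> {1..N}"
  shows "Gn n \<le> \<phi> n + (a + Ki * d) + (b + Ki\<^sup>2 * d) * norm (u n)"
  unfolding Gn_def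
proof (rule norm_blinfun_bound)
  show "0 \<le> \<phi> n + (a + Ki * d) + (b + Ki\<^sup>2 * d) * norm (u n)"
    using phi0 a0 Ki0 d0 b0 by (simp add: add_nonneg_nonneg)
  fix v
  have e: "blinfun_apply (toVs j (g n)) v = ftau T f N n v - blinfun_apply (A (u n)) v - blinfun_apply (xi n) (iota v)"
    using eqn(1)[OF n, of v] toVs_apply[OF j_lin] by simp
  have "norm (blinfun_apply (toVs j (g n)) v) \<le> \<bar>ftau T f N n v\<bar> + norm (blinfun_apply (A (u n)) v) + norm (blinfun_apply (xi n) (iota v))"
    unfolding e by (smt (verit) real_norm_def)
  also have "\<dots> \<le> \<phi> n * norm v + norm (A (u n)) * norm v + norm (xi n) * norm (iota v)"
    using ftau_bound[OF n, of v] norm_blinfun[of "A (u n)" v] norm_blinfun[of "xi n" "iota v"] by linarith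
  also have "\<dots> \<le> \<phi> n * norm v + (a + b * norm (u n)) * norm v + (d * (1 + Ki * norm (u n))) * (Ki * norm v)"
    using A_growth[of "u n"] xi_bound[OF n] Ki[of v] phi0[of n] a0 b0
    by (intro add_mono mult_mono) (auto simp: Ki0 d0 less_imp_le)
  also have "\<dots> = (\<phi> n + (a + Ki * d) + (b + Ki\<^sup>2 * d) * norm (u n)) * norm v"
    by (simp add: algebra_simps power2_eq_square)
  finally show "norm (blinfun_apply (toVs j (g n)) v) \<le> (\<phi> n + (a + Ki * d) + (b + Ki\<^sup>2 * d) * norm (u n)) * norm v" .
qed

lemma Gsum: "\<tau> * (\<Sum>n\<in>{1..N}. (Gn n)\<^sup>2) \<le> Gb"
proof -
  have p: "(Gn n)\<^sup>2 \<le> 3 * (\<phi> n)\<^sup>2 + 3 * (a + Ki * d)\<^sup>2 + 3 * (b + Ki\<^sup>2 * d)\<^sup>2 * (norm (u n))\<^sup>2" if n: "n \<in> {1..N}" for n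
  proof -
    have "(Gn n)\<^sup>2 \<le> (\<phi> n + (a + Ki * d) + (b + Ki\<^sup>2 * d) * norm (u n))\<^sup>2"
      using g_dual[OF n] by (simp add: Gn_def power_mono)
    also have "\<dots> \<le> 3 * (\<phi> n)\<^sup>2 + 3 * (a + Ki * d)\<^sup>2 + 3 * ((b + Ki\<^sup>2 * d) * norm (u n))\<^sup>2" by (rule sqb3)
    finally show ?thesis by (simp add: power_mult_distrib)
  qed
  have "\<tau> * (\<Sum>n\<in>{1..N}. (Gn n)\<^sup>2) \<le> \<tau> * (\<Sum>n\<in>{1..N}. 3 * (\<phi> n)\<^sup>2 + 3 * (a + Ki * d)\<^sup>2 + 3 * (b + Ki\<^sup>2 * d)\<^sup>2 * (norm (u n))\<^sup>2)"
    using tau0 p by (intro mult_left_mono sum_mono) auto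
  also have "\<dots> = 3 * (\<tau> * (\<Sum>n\<in>{1..N}. (\<phi> n)\<^sup>2)) + 3 * (a + Ki * d)\<^sup>2 * (real N * \<tau>)
       + 3 * (b + Ki\<^sup>2 * d)\<^sup>2 * (\<tau> * (\<Sum>n\<in>{1..N}. (norm (u n))\<^sup>2))"
    by (simp add: sum.distrib sum_distrib_left algebra_simps)
  also have "\<dots> \<le> 3 * (20 * \<Phi> + 20 * T) + 3 * (a + Ki * d)\<^sup>2 * T + 3 * (b + Ki\<^sup>2 * d)\<^sup>2 * Vb"
    using sum_phi Vsum NT by (intro add_mono mult_left_mono) auto
  finally show ?thesis unfolding Gb_def by (simp add: algebra_simps)
qed

lemma Xsum: "\<tau> * (\<Sum>n\<in>{1..N}. (norm (xi n))\<^sup>2) \<le> Xb"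
proof -
  have p: "(norm (xi n))\<^sup>2 \<le> 2 * d\<^sup>2 + 2 * d\<^sup>2 * Ki\<^sup>2 * (norm (u n))\<^sup>2" if n: "n \<in> {1..N}" for n
  proof -
    have "(norm (xi n))\<^sup>2 \<le> (d + d * Ki * norm (u n))\<^sup>2"
      using xi_bound[OF n] by (intro power_mono) (auto simp: algebra_simps)
    also have "\<dots> \<le> 2 * d\<^sup>2 + 2 * (d * Ki * norm (u n))\<^sup>2" by (rule sqb2)
    finally show ?thesis by (simp add: power_mult_distrib)
  qed
  have "\<tau> * (\<Sum>n\<in>{1..N}. (norm (xi n))\<^sup>2) \<le> \<tau> * (\<Sum>n\<in>{1..N}. 2 * d\<^sup>2 + 2 * d\<^sup>2 * Ki\<^sup>2 * (norm (u n))\<^sup>2)"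
    using tau0 p by (intro mult_left_mono sum_mono) auto
  also have "\<dots> = 2 * d\<^sup>2 * (real N * \<tau>) + 2 * d\<^sup>2 * Ki\<^sup>2 * (\<tau> * (\<Sum>n\<in>{1..N}. (norm (u n))\<^sup>2))"
    by (simp add: sum.distrib sum_distrib_left algebra_simps)
  also have "\<dots> \<le> 2 * d\<^sup>2 * T + 2 * d\<^sup>2 * Ki\<^sup>2 * Vb"
    using Vsum NT by (intro add_mono mult_left_mono) auto
  finally show ?thesis unfolding Xb_def .
qed

lemma Usum: "\<tau> * (\<Sum>k\<in>{0..N}. (norm (u k))\<^sup>2) \<le> c0\<^sup>2 + Vb"
proof -
  have "(\<Sum>k\<in>{0..N}. (norm (u k))\<^sup>2) = (norm (u 0))\<^sup>2 + (\<Sum>k\<in>{1..N}. (norm (u k))\<^sup>2)"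
    by (simp add: sum.atLeast_Suc_atMost)
  then have "\<tau> * (\<Sum>k\<in>{0..N}. (norm (u k))\<^sup>2) = \<tau> * (norm (u 0))\<^sup>2 + \<tau> * (\<Sum>k\<in>{1..N}. (norm (u k))\<^sup>2)"
    by (simp add: algebra_simps)
  also have "\<dots> \<le> c0\<^sup>2 + Vb" using c0 Vsum unfolding \<tau>_def by linarith
  finally show ?thesis .
qed

definition "Pv k = toVs j (u k)"
definition "Wd l = (norm (Pv (Suc l) - Pv l))\<^sup>2"
definition "Fw m = (\<Sum>l<m. Wd l)"

lemma Wd0: "Wd 0 = \<tau>\<^sup>2 * (Gn 1)\<^sup>2"
proof -
  have "Pv 1 - Pv 0 = toVs j (\<tau> *\<^sub>R g 1)" unfolding Pv_def tg1 by (simp add: toVs_diff[OF j_lin])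
  also have "\<dots> = \<tau> *\<^sub>R toVs j (g 1)" by (rule toVs_scaleR[OF j_lin])
  finally show ?thesis unfolding Wd_def Gn_def using tau0 by (simp add: power_mult_distrib)
qed

lemma Wd_rec:
  assumes l: "l \<ge> 1" "Suc l \<le> N"
  shows "Wd l \<le> Wd (l - 1) / 3 + 2 * (\<tau>\<^sup>2 * (Gn (Suc l))\<^sup>2) / 3"
proof -
  have tg: "\<tau> *\<^sub>R g (Suc l) = (3/2) *\<^sub>R u (Suc l) - 2 *\<^sub>R u l + (1/2) *\<^sub>R u (l - 1)"
    using tg2[of "Suc l"] l by (simp add: numeral_2_eq_2)
  have e43: "(4/3) *\<^sub>R u l = u l + (1/3) *\<^sub>R u l" using scaleR_add_left[of 1 "1/3" "u l"] by simp
  have "u (Suc l) - u l = (1/3) *\<^sub>R (u l - u (l - 1)) + (2/3) *\<^sub>R (\<tau> *\<^sub>R g (Suc l))"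
    unfolding tg by (simp add: algebra_simps e43)
  then have "Pv (Suc l) - Pv l = (1/3) *\<^sub>R (Pv l - Pv (l - 1)) + (2/3) *\<^sub>R (\<tau> *\<^sub>R toVs j (g (Suc l)))"
    unfolding Pv_def by (simp add: toVs_diff[OF j_lin, symmetric] toVs_add[OF j_lin] toVs_scaleR[OF j_lin])
  then have "norm (Pv (Suc l) - Pv l) \<le> norm (Pv l - Pv (l - 1)) / 3 + 2 * (\<tau> * Gn (Suc l)) / 3"
    using tau0 unfolding Gn_def by (metis (no_types, lifting) norm_triangle_ineq norm_scaleR abs_of_pos
        divide_pos_pos zero_less_numeral times_divide_eq_left mult_1 zero_less_one abs_of_nonneg less_imp_le
        mult.commute)
  then have "Wd l \<le> (norm (Pv l - Pv (l - 1)) / 3 + 2 * (\<tau> * Gn (Suc l)) / 3)\<^sup>2"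
    unfolding Wd_def by (intro power_mono) auto
  also have "\<dots> \<le> (norm (Pv l - Pv (l - 1)))\<^sup>2 / 3 + 2 * (\<tau> * Gn (Suc l))\<^sup>2 / 3" by (rule convex_sq)
  finally show ?thesis unfolding Wd_def using l by (simp add: power_mult_distrib)
qed

lemma Fw_ind: "m \<in> {1..N} \<Longrightarrow> Fw m + Wd (m - 1) / 2 \<le> (3/2) * \<tau>\<^sup>2 * (\<Sum>n\<in>{1..m}. (Gn n)\<^sup>2)"
proof (induction m)
  case 0 then show ?case by simp
next
  case (Suc m)
  show ?case
  proof (cases "m = 0")
    case True
    then show ?thesis unfolding Fw_def using Wd0 by simp
  next
    case False
    then have m1: "m \<in> {1..N}" using Suc.prems by auto
    define X where "X = \<tau>\<^sup>2 * (Gn (Suc m))\<^sup>2"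
    define S where "S = (\<Sum>n\<in>{1..m}. (Gn n)\<^sup>2)"
    have h1: "Wd m \<le> Wd (m - 1) / 3 + 2 * X / 3"
      using Wd_rec[of m] False Suc.prems unfolding X_def by auto
    have h2: "Fw (Suc m) = Fw m + Wd m" unfolding Fw_def by simp
    have h3: "Fw m + Wd (m - 1) / 2 \<le> (3/2) * \<tau>\<^sup>2 * S" using Suc.IH[OF m1] unfolding S_def .
    have h4: "(3/2) * \<tau>\<^sup>2 * (\<Sum>n\<in>{1..Suc m}. (Gn n)\<^sup>2) = (3/2) * \<tau>\<^sup>2 * S + (3/2) * X"
      unfolding S_def X_def by (simp add: algebra_simps)
    have h5: "X \<ge> 0" unfolding X_def by simp
    have h6: "Wd (Suc m - 1) = Wd m" by simp
    show ?thesis unfolding h4 h6 h2 using h1 h3 h5 by linarith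
  qed
qed

lemma Wd_nonneg: "Wd l \<ge> 0" unfolding Wd_def by simp

lemma Fw_mono: "k \<le> m \<Longrightarrow> Fw k \<le> Fw m"
  unfolding Fw_def by (rule sum_mono2) (auto simp: Wd_nonneg)

lemma Fw0: "Fw k \<ge> 0" unfolding Fw_def by (simp add: sum_nonneg Wd_nonneg)

lemma FwN: "real N * Fw N \<le> (3/2) * T * Gb"
proof -
  have "Fw N \<le> (3/2) * \<tau>\<^sup>2 * (\<Sum>n\<in>{1..N}. (Gn n)\<^sup>2)"
    using Fw_ind[of N] N1 Wd_nonneg[of "N - 1"] by simp
  also have "\<dots> = (3/2) * \<tau> * (\<tau> * (\<Sum>n\<in>{1..N}. (Gn n)\<^sup>2))" by (simp add: power2_eq_square)
  also have "\<dots> \<le> (3/2) * \<tau> * Gb" using Gsum tau0 by (intro mult_left_mono) auto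
  finally have "real N * Fw N \<le> real N * ((3/2) * \<tau> * Gb)" by (intro mult_left_mono) auto
  also have "\<dots> = (3/2) * (real N * \<tau>) * Gb" by simp
  finally show ?thesis unfolding NT .
qed

lemma pair_bound:
  assumes km: "k \<le> m" and mN: "m \<le> N"
  shows "(norm (Pv m - Pv k))\<^sup>2 \<le> real N * (Fw m - Fw k)"
proof -
  have "Pv m - Pv k = (\<Sum>l = k..<m. Pv (Suc l) - Pv l)" using sum_Suc_diff'[OF km, of Pv] by simp
  then have "norm (Pv m - Pv k) \<le> (\<Sum>l = k..<m. norm (Pv (Suc l) - Pv l))" by (simp add: norm_sum)
  then have "(norm (Pv m - Pv k))\<^sup>2 \<le> (\<Sum>l = k..<m. norm (Pv (Suc l) - Pv l))\<^sup>2"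
    by (intro power_mono) auto
  also have "\<dots> \<le> (\<Sum>l = k..<m. (norm (Pv (Suc l) - Pv l))\<^sup>2) * real (card {k..<m})"
    by (rule sum_squared_le_sum_of_squares)
  also have "\<dots> \<le> (\<Sum>l = k..<m. Wd l) * real N"
    unfolding Wd_def using km mN by (intro mult_left_mono) (auto simp: sum_nonneg)
  also have "(\<Sum>l = k..<m. Wd l) = Fw m - Fw k"
    unfolding Fw_def using km by (simp add: sum_diff_nat_ivl lessThan_atLeast0)
  finally show ?thesis by (simp add: mult.commute)
qed

lemma chain_bound:
  assumes mono: "\<And>i. i < L \<Longrightarrow> kk i \<le> kk (Suc i)" and top: "kk L \<le> N"
  shows "(\<Sum>i<L. (norm (Pv (kk (Suc i)) - Pv (kk i)))\<^sup>2) \<le> (3/2) * T * Gb"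
proof -
  have kmono: "i \<le> L \<Longrightarrow> kk i \<le> kk L" for i
  proof (induction "L - i" arbitrary: i)
    case 0 then show ?case by simp
  next
    case (Suc x)
    then have "kk (Suc i) \<le> kk L" by simp
    moreover have "kk i \<le> kk (Suc i)" using mono Suc by simp
    ultimately show ?case by simp
  qed
  have "(\<Sum>i<L. (norm (Pv (kk (Suc i)) - Pv (kk i)))\<^sup>2) \<le> (\<Sum>i<L. real N * (Fw (kk (Suc i)) - Fw (kk i)))"
  proof (rule sum_mono)
    fix i assume i: "i \<in> {..<L}"
    show "(norm (Pv (kk (Suc i)) - Pv (kk i)))\<^sup>2 \<le> real N * (Fw (kk (Suc i)) - Fw (kk i))"
      using i mono kmono[of "Suc i"] top by (intro pair_bound) auto
  qed
  also have "\<dots> = real N * (Fw (kk L) - Fw (kk 0))"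
  proof -
    have "(\<Sum>i<L. Fw (kk (Suc i)) - Fw (kk i)) = Fw (kk L) - Fw (kk 0)"
      using sum_lessThan_telescope[of "\<lambda>i. Fw (kk i)" L] by simp
    then show ?thesis by (simp add: sum_distrib_left[symmetric])
  qed
  also have "\<dots> \<le> real N * Fw N"
    using Fw0[of "kk 0"] Fw_mono[OF top] by (intro mult_left_mono) auto
  also have "\<dots> \<le> (3/2) * T * Gb" by (rule FwN)
  finally show ?thesis .
qed

end


lemma ceil_meas[measurable]: "(\<lambda>t::real. \<lceil>t / \<tau>\<rceil>) \<in> lebesgue_on S \<rightarrow>\<^sub>M count_space UNIV"
proof -
  have "(\<lambda>t::real. t / \<tau>) \<in> lebesgue_on S \<rightarrow>\<^sub>M borel" by measurable
  then show ?thesis by (rule measurable_compose) (rule measurable_real_ceiling)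
qed

lemma le_pred_leb[measurable]: "Measurable.pred (lebesgue_on S) (\<lambda>t::real. t \<le> c)"
  by (rule pred_le_const) (rule id_meas_leb, simp)

lemma norm_affine: fixes P Q :: "'a::real_inner"
  shows "norm (P + s *\<^sub>R Q) = sqrt ((norm P)\<^sup>2 + 2 * s * inner P Q + s\<^sup>2 * (norm Q)\<^sup>2)"
  by (simp add: norm_eq_sqrt_inner inner_add_left inner_add_right inner_commute power2_eq_square algebra_simps)

lemma finite_null_leb:
  assumes "finite G"
  shows "AE t in lebesgue_on {0..T::real}. t \<notin> G"
proof (rule AE_I')
  have "G \<inter> {0..T} \<in> null_sets lebesgue"
    using assms by (intro null_sets_completionI countable_imp_null_set_lborel countable_finite) auto
  then show "G \<inter> {0..T} \<in> null_sets (lebesgue_on {0..T})"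
    by (subst null_sets_restrict_space) auto
  show "{x \<in> space (lebesgue_on {0..T}). \<not> x \<notin> G} \<subseteq> G \<inter> {0..T}" by auto
qed

lemma int_piecewise:
  fixes h :: "real \<Rightarrow> real" and c :: "nat \<Rightarrow> real"
  assumes tau: "\<tau> > 0" and NT: "real N * \<tau> = T" and G: "finite G"
    and c0: "\<And>n. c n \<ge> 0"
    and pw: "\<And>t. t \<in> {0..T} \<Longrightarrow> t \<notin> G \<Longrightarrow> \<exists>n\<in>{1..N}. t \<in> {(real n - 1) * \<tau> .. real n * \<tau>} \<and> h t \<le> c n"
  shows "(\<integral>\<^sup>+ t. ennreal (h t) \<partial>lebesgue_on {0..T}) \<le> ennreal (\<tau> * (\<Sum>n\<in>{1..N}. c n))"
proof -
  let ?J = "\<lambda>n. {(real n - 1) * \<tau> .. real n * \<tau>}"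
  let ?L = "lebesgue_on {0..T}"
  have sub: "?J n \<subseteq> {0..T}" if "n \<in> {1..N}" for n
  proof -
    have "real n * \<tau> \<le> real N * \<tau>" using that tau by (intro mult_right_mono) auto
    then show ?thesis using that tau NT by auto
  qed
  have "(\<integral>\<^sup>+ t. ennreal (h t) \<partial>?L) \<le> (\<integral>\<^sup>+ t. (\<Sum>n\<in>{1..N}. ennreal (c n) * indicator (?J n) t) \<partial>?L)"
  proof (rule nn_integral_mono_AE)
    show "AE t in ?L. ennreal (h t) \<le> (\<Sum>n\<in>{1..N}. ennreal (c n) * indicator (?J n) t)"
      using finite_null_leb[OF G, of T] AE_space[of ?L]
    proof eventually_elim
      case (elim t)
      then have t: "t \<in> {0..T}" "t \<notin> G" by auto
      obtain n where n: "n \<in> {1..N}" "t \<in> ?J n" "h t \<le> c n" using pw[OF t] by blast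
      have "ennreal (h t) \<le> ennreal (c n) * indicator (?J n) t" using n by (simp add: ennreal_leI)
      also have "\<dots> \<le> (\<Sum>n\<in>{1..N}. ennreal (c n) * indicator (?J n) t)"
        using n(1) by (rule member_le_sum) auto
      finally show ?case .
    qed
  qed
  also have "\<dots> = (\<Sum>n\<in>{1..N}. (\<integral>\<^sup>+ t. ennreal (c n) * indicator (?J n) t \<partial>?L))"
    by (rule nn_integral_sum) measurable
  also have "\<dots> = (\<Sum>n\<in>{1..N}. ennreal (c n) * ennreal \<tau>)"
  proof (rule sum.cong)
    fix n assume n: "n \<in> {1..N}"
    have s: "?J n \<in> sets ?L" using sub[OF n] by (subst sets_restrict_space_iff) auto
    have "emeasure ?L (?J n) = emeasure lebesgue (?J n)" using sub[OF n] by (subst emeasure_restrict_space) auto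
    also have "\<dots> = ennreal \<tau>" using tau by (simp add: algebra_simps)
    finally show "(\<integral>\<^sup>+ t. ennreal (c n) * indicator (?J n) t \<partial>?L) = ennreal (c n) * ennreal \<tau>"
      using nn_integral_cmult_indicator[OF s, of "ennreal (c n)"] by simp
  qed simp
  also have "\<dots> = ennreal (\<tau> * (\<Sum>n\<in>{1..N}. c n))"
    using c0 tau by (simp add: ennreal_mult[symmetric] sum_distrib_left mult.commute)
  finally show ?thesis .
qed


lemma affine_bound1:
  fixes X Y :: "'a::real_normed_vector"
  assumes "\<bar>s\<bar> \<le> 1"
  shows "norm ((3/2) *\<^sub>R X - (1/2) *\<^sub>R Y + s *\<^sub>R (X - Y)) \<le> 3 * (norm X + norm Y + norm Y)"
proof -
  have "norm ((3/2) *\<^sub>R X - (1/2) *\<^sub>R Y + s *\<^sub>R (X - Y)) \<le> norm ((3/2) *\<^sub>R X) + norm ((1/2) *\<^sub>R Y) + norm (s *\<^sub>R (X - Y))"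
    by (smt (verit) norm_triangle_ineq norm_triangle_ineq4)
  also have "norm (s *\<^sub>R (X - Y)) \<le> norm X + norm Y"
  proof -
    have "norm (s *\<^sub>R (X - Y)) = \<bar>s\<bar> * norm (X - Y)" by simp
    also have "\<dots> \<le> 1 * norm (X - Y)" using assms by (intro mult_right_mono) auto
    also have "\<dots> \<le> norm X + norm Y" by (simp add: norm_triangle_ineq4)
    finally show ?thesis .
  qed
  finally have h: "norm ((3/2) *\<^sub>R X - (1/2) *\<^sub>R Y + s *\<^sub>R (X - Y)) \<le> norm ((3/2) *\<^sub>R X) + norm ((1/2) *\<^sub>R Y) + (norm X + norm Y)"
    by simp
  have h2: "norm ((3/2) *\<^sub>R X - (1/2) *\<^sub>R Y + s *\<^sub>R (X - Y)) \<le> 5 * norm X / 2 + 3 * norm Y / 2"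
    using h by simp
  show ?thesis using h2 norm_ge_zero[of X] norm_ge_zero[of Y] by (simp only: distrib_left)
qed

lemma affine_bound2:
  fixes X Y Z :: "'a::real_normed_vector"
  assumes "\<bar>s\<bar> \<le> 1"
  shows "norm ((3/2) *\<^sub>R X - (1/2) *\<^sub>R Y + s *\<^sub>R ((3/2) *\<^sub>R X - 2 *\<^sub>R Y + (1/2) *\<^sub>R Z)) \<le> 3 * (norm X + norm Y + norm Z)"
proof -
  have "norm ((3/2) *\<^sub>R X - (1/2) *\<^sub>R Y + s *\<^sub>R ((3/2) *\<^sub>R X - 2 *\<^sub>R Y + (1/2) *\<^sub>R Z))
     \<le> norm ((3/2) *\<^sub>R X) + norm ((1/2) *\<^sub>R Y) + norm (s *\<^sub>R ((3/2) *\<^sub>R X - 2 *\<^sub>R Y + (1/2) *\<^sub>R Z))"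
    by (smt (verit) norm_triangle_ineq norm_triangle_ineq4)
  also have "norm (s *\<^sub>R ((3/2) *\<^sub>R X - 2 *\<^sub>R Y + (1/2) *\<^sub>R Z)) \<le> (3/2) * norm X + 2 * norm Y + (1/2) * norm Z"
  proof -
    have "norm (s *\<^sub>R ((3/2) *\<^sub>R X - 2 *\<^sub>R Y + (1/2) *\<^sub>R Z)) = \<bar>s\<bar> * norm ((3/2) *\<^sub>R X - 2 *\<^sub>R Y + (1/2) *\<^sub>R Z)" by simp
    also have "\<dots> \<le> 1 * norm ((3/2) *\<^sub>R X - 2 *\<^sub>R Y + (1/2) *\<^sub>R Z)" using assms by (intro mult_right_mono) auto
    also have "\<dots> \<le> norm ((3/2) *\<^sub>R X) + norm (2 *\<^sub>R Y) + norm ((1/2) *\<^sub>R Z)"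
      by (smt (verit) norm_triangle_ineq norm_triangle_ineq4 mult_1)
    finally show ?thesis by simp
  qed
  finally have h: "norm ((3/2) *\<^sub>R X - (1/2) *\<^sub>R Y + s *\<^sub>R ((3/2) *\<^sub>R X - 2 *\<^sub>R Y + (1/2) *\<^sub>R Z))
     \<le> norm ((3/2) *\<^sub>R X) + norm ((1/2) *\<^sub>R Y) + ((3/2) * norm X + 2 * norm Y + (1/2) * norm Z)" by simp
  have h2: "norm ((3/2) *\<^sub>R X - (1/2) *\<^sub>R Y + s *\<^sub>R ((3/2) *\<^sub>R X - 2 *\<^sub>R Y + (1/2) *\<^sub>R Z))
     \<le> 3 * norm X + (5 * norm Y / 2 + norm Z / 2)" using h by simp
  show ?thesis using h2 norm_ge_zero[of X] norm_ge_zero[of Y] norm_ge_zero[of Z] by (simp only: distrib_left)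
qed

context rothe begin

definition "kidx t = nat \<lceil>t / \<tau>\<rceil>"
definition "nn t = max 1 (kidx t)"
definition "Cn n = (if n = 1 then (3/2) *\<^sub>R u 1 - (1/2) *\<^sub>R u 0 else (3/2) *\<^sub>R u n - (1/2) *\<^sub>R u (n - 1))"
definition "Dn n = (if n = 1 then u 1 - u 0 else (3/2) *\<^sub>R u n - 2 *\<^sub>R u (n - 1) + (1/2) *\<^sub>R u (n - 2))"

lemma Tt: "T / real N = \<tau>" unfolding \<tau>_def ..

lemma kidx_le: "t \<le> T \<Longrightarrow> kidx t \<le> N"
proof -
  assume t: "t \<le> T"
  have "t / \<tau> \<le> T / \<tau>" using t tau0 by (simp add: divide_right_mono)
  also have "T / \<tau> = real N" using NT tau0 by (simp add: field_simps)
  finally have "\<lceil>t / \<tau>\<rceil> \<le> \<lceil>real N\<rceil>" by (rule ceiling_mono)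
  then have "nat \<lceil>t / \<tau>\<rceil> \<le> nat \<lceil>real N\<rceil>" by (rule nat_mono)
  then show ?thesis unfolding kidx_def by simp
qed

lemma kidx_in:
  assumes "0 < t" "t \<le> T"
  shows "kidx t \<in> {1..N}" "real (kidx t) - 1 < t / \<tau>" "t / \<tau> \<le> real (kidx t)"
    "t \<in> {(real (kidx t) - 1) * \<tau> .. real (kidx t) * \<tau>}"
proof -
  have p: "t / \<tau> > 0" using assms tau0 by simp
  then have c1: "\<lceil>t / \<tau>\<rceil> \<ge> 1" by (simp add: one_le_ceiling)
  then have kr: "real (kidx t) = of_int \<lceil>t / \<tau>\<rceil>" unfolding kidx_def by simp
  have "nat 1 \<le> nat \<lceil>t / \<tau>\<rceil>" using c1 by (rule nat_mono)
  then show "kidx t \<in> {1..N}" using kidx_le[OF assms(2)] unfolding kidx_def by auto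
  show a: "real (kidx t) - 1 < t / \<tau>" unfolding kr by linarith
  show b: "t / \<tau> \<le> real (kidx t)" unfolding kr by (rule le_of_int_ceiling)
  have "(real (kidx t) - 1) * \<tau> \<le> t" using a tau0 by (simp add: field_simps)
  moreover have "t \<le> real (kidx t) * \<tau>" using b tau0 by (simp add: field_simps)
  ultimately show "t \<in> {(real (kidx t) - 1) * \<tau> .. real (kidx t) * \<tau>}" by simp
qed

lemma ubar_eq: "t \<in> {0..T} \<Longrightarrow> ubar T N u t = u (kidx t)"
  unfolding ubar_def kidx_def Tt by auto

lemma xibar_eq: "xibar T N xi t = xi (kidx t)"
  unfolding xibar_def kidx_def Tt ..

lemma uhat_CD: "uhat T N u t = Cn (nn t) + ((t - real (nn t) * \<tau>) / \<tau>) *\<^sub>R Dn (nn t)"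
  unfolding uhat_def Let_def Tt nn_def[symmetric] kidx_def[symmetric] Cn_def Dn_def by auto

lemma nn_props:
  assumes t: "t \<in> {0..T}"
  shows "nn t \<in> {1..N}" "t \<in> {(real (nn t) - 1) * \<tau> .. real (nn t) * \<tau>}" "\<bar>(t - real (nn t) * \<tau>) / \<tau>\<bar> \<le> 1"
proof -
  have i: "nn t \<in> {1..N} \<and> t \<in> {(real (nn t) - 1) * \<tau> .. real (nn t) * \<tau>}"
  proof (cases "t = 0")
    case True
    then have "nn t = 1" unfolding nn_def kidx_def by simp
    then show ?thesis using True N1 tau0 by simp
  next
    case False
    then have "0 < t" using t by simp
    then have "nn t = kidx t" using kidx_in[of t] t unfolding nn_def by auto
    then show ?thesis using kidx_in[of t] t \<open>0 < t\<close> by auto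
  qed
  then show "nn t \<in> {1..N}" "t \<in> {(real (nn t) - 1) * \<tau> .. real (nn t) * \<tau>}" by auto
  have "(real (nn t) - 1) * \<tau> \<le> t" "t \<le> real (nn t) * \<tau>" using i by auto
  then have "- \<tau> \<le> t - real (nn t) * \<tau>" "t - real (nn t) * \<tau> \<le> 0" by (auto simp: algebra_simps)
  then show "\<bar>(t - real (nn t) * \<tau>) / \<tau>\<bar> \<le> 1" using tau0 by (simp add: abs_le_iff field_simps)
qed

lemma uhat_lin_bound:
  assumes Lm: "bounded_linear Lm" and t: "t \<in> {0..T}"
  shows "norm (Lm (uhat T N u t)) \<le> 3 * (norm (Lm (u (nn t))) + norm (Lm (u (nn t - 1))) + norm (Lm (u (nn t - 2))))"
proof -
  define s where "s = (t - real (nn t) * \<tau>) / \<tau>"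
  have s1: "\<bar>s\<bar> \<le> 1" unfolding s_def using nn_props[OF t] by simp
  note L = linear_simps[OF Lm]
  have e: "Lm (uhat T N u t) = Lm (Cn (nn t)) + s *\<^sub>R Lm (Dn (nn t))" unfolding uhat_CD s_def L ..
  show ?thesis
  proof (cases "nn t = 1")
    case True
    have "Lm (uhat T N u t) = (3/2) *\<^sub>R Lm (u 1) - (1/2) *\<^sub>R Lm (u 0) + s *\<^sub>R (Lm (u 1) - Lm (u 0))"
      unfolding e True Cn_def Dn_def by (simp add: L)
    then show ?thesis using affine_bound1[OF s1, of "Lm (u 1)" "Lm (u 0)"] True by simp
  next
    case False
    have "Lm (uhat T N u t) = (3/2) *\<^sub>R Lm (u (nn t)) - (1/2) *\<^sub>R Lm (u (nn t - 1))
        + s *\<^sub>R ((3/2) *\<^sub>R Lm (u (nn t)) - 2 *\<^sub>R Lm (u (nn t - 1)) + (1/2) *\<^sub>R Lm (u (nn t - 2)))"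
      unfolding e using False unfolding Cn_def Dn_def by (simp add: L)
    then show ?thesis using affine_bound2[OF s1] by simp
  qed
qed

end



context rothe begin

lemma Vb0: "Vb \<ge> 0"
proof -
  have "0 \<le> \<tau> * (\<Sum>n\<in>{1..N}. (norm (u n))\<^sup>2)" using tau0 by (simp add: sum_nonneg)
  then show ?thesis using Vsum by linarith
qed

lemma Gb0: "Gb \<ge> 0"
proof -
  have "0 \<le> \<tau> * (\<Sum>n\<in>{1..N}. (Gn n)\<^sup>2)" using tau0 by (simp add: sum_nonneg)
  then show ?thesis using Gsum by linarith
qed

lemma Xb0: "Xb \<ge> 0"
proof -
  have "0 \<le> \<tau> * (\<Sum>n\<in>{1..N}. (norm (xi n))\<^sup>2)" using tau0 by (simp add: sum_nonneg)
  then show ?thesis using Xsum by linarith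
qed

lemma Eb0: "Eb \<ge> 0" using E_le[of 1] N1 E0[of 1] by simp

lemma B_L2_ubar: "L2_norm T (ubar T N u) \<le> ennreal (sqrt Vb)"
  unfolding L2_norm_def
proof (rule ensqrt_le)
  show "0 \<le> sqrt Vb" using Vb0 by simp
  have "(\<integral>\<^sup>+ t. ennreal ((norm (ubar T N u t))\<^sup>2) \<partial>lebesgue_on {0..T}) \<le> ennreal (\<tau> * (\<Sum>n\<in>{1..N}. (norm (u n))\<^sup>2))"
  proof (rule int_piecewise[OF tau0 NT, of "{0}"])
    fix t assume t: "t \<in> {0..T}" "t \<notin> {0}"
    then have "0 < t" by auto
    then show "\<exists>n\<in>{1..N}. t \<in> {(real n - 1) * \<tau> .. real n * \<tau>} \<and> (norm (ubar T N u t))\<^sup>2 \<le> (norm (u n))\<^sup>2"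
      using kidx_in[of t] t ubar_eq[of t] by (intro bexI[of _ "kidx t"]) auto
  qed auto
  also have "\<dots> \<le> ennreal Vb" using Vsum by (simp add: ennreal_leI)
  finally show "(\<integral>\<^sup>+ t. ennreal ((norm (ubar T N u t))\<^sup>2) \<partial>lebesgue_on {0..T}) \<le> ennreal ((sqrt Vb)\<^sup>2)"
    using Vb0 by simp
qed

lemma B_L2_xibar: "L2_norm T (xibar T N xi) \<le> ennreal (sqrt Xb)"
  unfolding L2_norm_def
proof (rule ensqrt_le)
  show "0 \<le> sqrt Xb" using Xb0 by simp
  have "(\<integral>\<^sup>+ t. ennreal ((norm (xibar T N xi t))\<^sup>2) \<partial>lebesgue_on {0..T}) \<le> ennreal (\<tau> * (\<Sum>n\<in>{1..N}. (norm (xi n))\<^sup>2))"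
  proof (rule int_piecewise[OF tau0 NT, of "{0}"])
    fix t assume t: "t \<in> {0..T}" "t \<notin> {0}"
    then have "0 < t" by auto
    then show "\<exists>n\<in>{1..N}. t \<in> {(real n - 1) * \<tau> .. real n * \<tau>} \<and> (norm (xibar T N xi t))\<^sup>2 \<le> (norm (xi n))\<^sup>2"
      using kidx_in[of t] t xibar_eq[of t] by (intro bexI[of _ "kidx t"]) auto
  qed auto
  also have "\<dots> \<le> ennreal Xb" using Xsum by (simp add: ennreal_leI)
  finally show "(\<integral>\<^sup>+ t. ennreal ((norm (xibar T N xi t))\<^sup>2) \<partial>lebesgue_on {0..T}) \<le> ennreal ((sqrt Xb)\<^sup>2)"
    using Xb0 by simp
qed

lemma B_L2_uhat: "L2_norm T (uhat T N u) \<le> ennreal (sqrt (108 * (c0\<^sup>2 + Vb)))"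
  unfolding L2_norm_def
proof (rule ensqrt_le)
  show "0 \<le> sqrt (108 * (c0\<^sup>2 + Vb))" using Vb0 by simp
  define c where "c n = 27 * ((norm (u n))\<^sup>2 + (norm (u (n - 1)))\<^sup>2 + (norm (u (n - 2)))\<^sup>2)" for n
  have "(\<integral>\<^sup>+ t. ennreal ((norm (uhat T N u t))\<^sup>2) \<partial>lebesgue_on {0..T}) \<le> ennreal (\<tau> * (\<Sum>n\<in>{1..N}. c n))"
  proof (rule int_piecewise[OF tau0 NT, of "{}"])
    fix t assume t: "t \<in> {0..T}"
    have b: "norm (uhat T N u t) \<le> 3 * (norm (u (nn t)) + norm (u (nn t - 1)) + norm (u (nn t - 2)))"
      using uhat_lin_bound[OF bounded_linear_ident t] by simp
    have "(norm (uhat T N u t))\<^sup>2 \<le> (3 * (norm (u (nn t)) + norm (u (nn t - 1)) + norm (u (nn t - 2))))\<^sup>2"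
      using b by (intro power_mono) auto
    also have "\<dots> = 3\<^sup>2 * (norm (u (nn t)) + norm (u (nn t - 1)) + norm (u (nn t - 2)))\<^sup>2"
      by (rule power_mult_distrib)
    also have "\<dots> = 9 * (norm (u (nn t)) + norm (u (nn t - 1)) + norm (u (nn t - 2)))\<^sup>2"
      by (simp only: power2_eq_square)
    also have "\<dots> \<le> 9 * (3 * (norm (u (nn t)))\<^sup>2 + 3 * (norm (u (nn t - 1)))\<^sup>2 + 3 * (norm (u (nn t - 2)))\<^sup>2)"
      by (intro mult_left_mono sqb3) auto
    also have "\<dots> = c (nn t)" unfolding c_def by simp
    finally show "\<exists>n\<in>{1..N}. t \<in> {(real n - 1) * \<tau> .. real n * \<tau>} \<and> (norm (uhat T N u t))\<^sup>2 \<le> c n"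
      using nn_props[OF t] by blast
  qed (auto simp: c_def)
  also have "\<dots> \<le> ennreal (108 * (c0\<^sup>2 + Vb))"
  proof (rule ennreal_leI)
    let ?h = "\<lambda>k. (norm (u k))\<^sup>2"
    have "(\<Sum>n\<in>{1..N}. c n) = 27 * ((\<Sum>n\<in>{1..N}. ?h n) + (\<Sum>n\<in>{1..N}. ?h (n - 1)) + (\<Sum>n\<in>{1..N}. ?h (n - 2)))"
      unfolding c_def by (simp add: sum.distrib sum_distrib_left)
    also have "\<dots> \<le> 27 * ((\<Sum>k\<in>{0..N}. ?h k) + (\<Sum>k\<in>{0..N}. ?h k) + 2 * (\<Sum>k\<in>{0..N}. ?h k))"
    proof -
      have "(\<Sum>n\<in>{1..N}. ?h n) \<le> (\<Sum>k\<in>{0..N}. ?h k)" by (rule sum_mono2) auto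
      moreover have "(\<Sum>n\<in>{1..N}. ?h (n - 1)) \<le> (\<Sum>k\<in>{0..N}. ?h k)" by (rule sum_shift1_le) simp
      moreover have "(\<Sum>n\<in>{1..N}. ?h (n - 2)) \<le> 2 * (\<Sum>k\<in>{0..N}. ?h k)" by (rule sum_shift2_le) simp
      ultimately show ?thesis by simp
    qed
    also have "\<dots> = 108 * (\<Sum>k\<in>{0..N}. ?h k)" by simp
    finally have "\<tau> * (\<Sum>n\<in>{1..N}. c n) \<le> \<tau> * (108 * (\<Sum>k\<in>{0..N}. ?h k))" using tau0 by simp
    also have "\<dots> = 108 * (\<tau> * (\<Sum>k\<in>{0..N}. ?h k))" by simp
    also have "\<dots> \<le> 108 * (c0\<^sup>2 + Vb)" using Usum by simp
    finally show "\<tau> * (\<Sum>n\<in>{1..N}. c n) \<le> 108 * (c0\<^sup>2 + Vb)" .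
  qed
  finally show "(\<integral>\<^sup>+ t. ennreal ((norm (uhat T N u t))\<^sup>2) \<partial>lebesgue_on {0..T}) \<le> ennreal ((sqrt (108 * (c0\<^sup>2 + Vb)))\<^sup>2)"
    using Vb0 by simp
qed


lemma meas_ubar: "(\<lambda>t. ereal (norm (j (ubar T N u t)))) \<in> borel_measurable (lebesgue_on {0..T})"
proof -
  define ix where "ix t = (if t \<le> 0 then 0 else nat \<lceil>t / (T / real N)\<rceil>)" for t :: real
  have ixm: "ix \<in> lebesgue_on {0..T} \<rightarrow>\<^sub>M count_space UNIV" unfolding ix_def by measurable
  have eq: "(\<lambda>t. ereal (norm (j (ubar T N u t)))) = (\<lambda>t. (\<lambda>i t. ereal (norm (j (u i)))) (ix t) t)"
    unfolding ubar_def ix_def by (auto simp: fun_eq_iff)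
  show ?thesis unfolding eq by (rule measurable_compose_countable'[OF _ ixm]) auto
qed

lemma B_Linf_ubar: "Linf_norm T (\<lambda>t. j (ubar T N u t)) \<le> ereal (sqrt (M0\<^sup>2 + Eb))"
  unfolding Linf_norm_def
proof (rule esssup_I[OF meas_ubar])
  show "AE t in lebesgue_on {0..T}. ereal (norm (j (ubar T N u t))) \<le> ereal (sqrt (M0\<^sup>2 + Eb))"
    using AE_space
  proof eventually_elim
    case (elim t)
    then have t: "t \<in> {0..T}" by simp
    have "(norm (aa (kidx t)))\<^sup>2 \<le> M0\<^sup>2 + Eb" using aa_le kidx_le[of t] t by auto
    then have "norm (aa (kidx t)) \<le> sqrt (M0\<^sup>2 + Eb)" by (rule real_le_rsqrt)
    then show ?case using ubar_eq[OF t] unfolding aa_def by simp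
  qed
qed

lemma nn_meas: "nn \<in> lebesgue_on {0..T} \<rightarrow>\<^sub>M count_space UNIV"
proof -
  have "(\<lambda>t. nat \<lceil>t / \<tau>\<rceil>) \<in> lebesgue_on {0..T} \<rightarrow>\<^sub>M count_space UNIV" by measurable
  then have "(\<lambda>t. max 1 (nat \<lceil>t / \<tau>\<rceil>)) \<in> lebesgue_on {0..T} \<rightarrow>\<^sub>M count_space UNIV"
    by (rule measurable_compose) simp
  then show ?thesis unfolding nn_def[abs_def] kidx_def .
qed

lemma meas_uhat: "(\<lambda>t. ereal (norm (j (uhat T N u t)))) \<in> borel_measurable (lebesgue_on {0..T})"
proof -
  define F where "F n t = ereal (sqrt ((norm (j (Cn n)))\<^sup>2 + 2 * ((t - real n * \<tau>) / \<tau>) * inner (j (Cn n)) (j (Dn n))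
      + ((t - real n * \<tau>) / \<tau>)\<^sup>2 * (norm (j (Dn n)))\<^sup>2))" for n t
  have eq: "(\<lambda>t. ereal (norm (j (uhat T N u t)))) = (\<lambda>t. F (nn t) t)"
    unfolding uhat_CD F_def by (auto simp: fun_eq_iff linear_simps[OF j_lin] norm_affine)
  have "\<And>n. F n \<in> borel_measurable (lebesgue_on {0..T})" unfolding F_def by measurable
  then show ?thesis unfolding eq by (rule measurable_compose_countable'[OF _ nn_meas]) auto
qed

lemma B_Linf_uhat: "Linf_norm T (\<lambda>t. j (uhat T N u t)) \<le> ereal (9 * sqrt (M0\<^sup>2 + Eb))"
  unfolding Linf_norm_def
proof (rule esssup_I[OF meas_uhat])
  show "AE t in lebesgue_on {0..T}. ereal (norm (j (uhat T N u t))) \<le> ereal (9 * sqrt (M0\<^sup>2 + Eb))"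
    using AE_space
  proof eventually_elim
    case (elim t)
    then have t: "t \<in> {0..T}" by simp
    have b: "norm (aa k) \<le> sqrt (M0\<^sup>2 + Eb)" if "k \<le> N" for k
      using aa_le[of k] that by (intro real_le_rsqrt) auto
    have nN: "nn t \<le> N" using nn_props(1)[OF t] by simp
    have "norm (j (uhat T N u t)) \<le> 3 * (norm (aa (nn t)) + norm (aa (nn t - 1)) + norm (aa (nn t - 2)))"
      using uhat_lin_bound[OF j_lin t] unfolding aa_def .
    also have "\<dots> \<le> 3 * (sqrt (M0\<^sup>2 + Eb) + sqrt (M0\<^sup>2 + Eb) + sqrt (M0\<^sup>2 + Eb))"
      using b[of "nn t"] b[of "nn t - 1"] b[of "nn t - 2"] nN by (intro mult_left_mono add_mono) auto
    finally show ?case by simp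
  qed
qed

lemma B_BV: "BV2_norm T (\<lambda>t. toVs j (ubar T N u t)) \<le> ennreal (sqrt ((3/2) * T * Gb))"
  unfolding BV2_norm_def
proof (rule ensqrt_le)
  show "0 \<le> sqrt ((3/2) * T * Gb)" using T0 Gb0 by simp
  show "(SUP p\<in>partitions T. ennreal (\<Sum>i<length p - 1. (norm (toVs j (ubar T N u (p ! Suc i)) - toVs j (ubar T N u (p ! i))))\<^sup>2))
      \<le> ennreal ((sqrt ((3/2) * T * Gb))\<^sup>2)"
  proof (rule SUP_least)
    fix p assume p: "p \<in> partitions T"
    then have sw: "sorted_wrt (<) p" and lp: "length p \<ge> 2" and hp: "hd p = 0" and lt: "last p = T"
      unfolding partitions_def by auto
    define L where "L = length p - 1"
    have pne: "p \<noteq> []" using lp by auto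
    have p0: "p ! 0 = 0" using hp pne by (simp add: hd_conv_nth)
    have pL: "p ! L = T" using lt pne unfolding L_def by (simp add: last_conv_nth)
    have Ll: "L < length p" unfolding L_def using lp by simp
    have inr: "p ! i \<in> {0..T}" if i: "i \<le> L" for i
    proof -
      have a: "p ! 0 \<le> p ! i"
      proof (cases "i = 0")
        case False
        then show ?thesis using sorted_wrt_nth_less[OF sw, of 0 i] i Ll by auto
      qed simp
      have b: "p ! i \<le> p ! L"
      proof (cases "i = L")
        case False
        then show ?thesis using sorted_wrt_nth_less[OF sw, of i L] i Ll by auto
      qed simp
      show ?thesis using a b p0 pL by simp
    qed
    define kk where "kk i = kidx (p ! i)" for i
    have mono: "kk i \<le> kk (Suc i)" if "i < L" for i
    proof -
      have "p ! i < p ! Suc i" using sorted_wrt_nth_less[OF sw, of i "Suc i"] that Ll by auto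
      then have "p ! i / \<tau> \<le> p ! Suc i / \<tau>" using tau0 by (simp add: divide_right_mono)
      then have "\<lceil>p ! i / \<tau>\<rceil> \<le> \<lceil>p ! Suc i / \<tau>\<rceil>" by (rule ceiling_mono)
      then show ?thesis unfolding kk_def kidx_def by (rule nat_mono)
    qed
    have top: "kk L \<le> N" unfolding kk_def using kidx_le pL by simp
    have eqs: "toVs j (ubar T N u (p ! i)) = Pv (kk i)" if "i \<le> L" for i
      using ubar_eq[OF inr[OF that]] unfolding Pv_def kk_def by simp
    have "(\<Sum>i<length p - 1. (norm (toVs j (ubar T N u (p ! Suc i)) - toVs j (ubar T N u (p ! i))))\<^sup>2)
        = (\<Sum>i<L. (norm (Pv (kk (Suc i)) - Pv (kk i)))\<^sup>2)"
      unfolding L_def[symmetric] by (rule sum.cong) (auto simp: eqs)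
    also have "\<dots> \<le> (3/2) * T * Gb" by (rule chain_bound[OF mono top])
    finally show "ennreal (\<Sum>i<length p - 1. (norm (toVs j (ubar T N u (p ! Suc i)) - toVs j (ubar T N u (p ! i))))\<^sup>2)
        \<le> ennreal ((sqrt ((3/2) * T * Gb))\<^sup>2)"
      using T0 Gb0 by (simp add: ennreal_leI)
  qed
qed

lemma B_M22: "M22_norm T j (ubar T N u) \<le> ennreal (sqrt Vb + sqrt ((3/2) * T * Gb))"
proof -
  have "M22_norm T j (ubar T N u) \<le> ennreal (sqrt Vb) + ennreal (sqrt ((3/2) * T * Gb))"
    unfolding M22_norm_def using B_L2_ubar B_BV by (rule add_mono)
  also have "\<dots> = ennreal (sqrt Vb + sqrt ((3/2) * T * Gb))"
    using Vb0 Gb0 T0 by (simp add: ennreal_plus)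
  finally show ?thesis .
qed

lemma Dn_g: "n \<ge> 1 \<Longrightarrow> Dn n = \<tau> *\<^sub>R g n"
  unfolding Dn_def using tg1 tg2[of n] by auto

lemma deriv_at:
  assumes n: "n \<in> {1..N}" and a: "(real n - 1) * \<tau> < t" and b: "t < real n * \<tau>"
  shows "vector_derivative (uhat T N u) (at t) = g n"
proof -
  define S where "S = {(real n - 1) * \<tau> <..< real n * \<tau>}"
  have nnS: "nn y = n" if y: "y \<in> S" for y
  proof -
    have "real n - 1 < y / \<tau>" "y / \<tau> < real n" using y tau0 unfolding S_def by (auto simp: field_simps)
    then have "\<lceil>y / \<tau>\<rceil> = int n" by (subst ceiling_eq_iff) auto
    then show ?thesis unfolding nn_def kidx_def using n by simp
  qed
  have eqS: "Cn n + ((y - real n * \<tau>) / \<tau>) *\<^sub>R Dn n = uhat T N u y" if "y \<in> S" for y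
    using uhat_CD[of y] nnS[OF that] by simp
  have der: "((\<lambda>y. Cn n + ((y - real n * \<tau>) / \<tau>) *\<^sub>R Dn n) has_vector_derivative (1 / \<tau>) *\<^sub>R Dn n) (at t)"
    using tau0 by (auto intro!: derivative_eq_intros)
  have "(uhat T N u has_vector_derivative (1 / \<tau>) *\<^sub>R Dn n) (at t)"
  proof (rule has_vector_derivative_transform_within_open[OF der, where S=S])
    show "open S" unfolding S_def by simp
    show "t \<in> S" unfolding S_def using a b by simp
    show "\<And>y. y \<in> S \<Longrightarrow> Cn n + ((y - real n * \<tau>) / \<tau>) *\<^sub>R Dn n = uhat T N u y" by (rule eqS)
  qed
  then have "vector_derivative (uhat T N u) (at t) = (1 / \<tau>) *\<^sub>R Dn n" by (rule vector_derivative_at)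
  also have "\<dots> = g n" using Dn_g[of n] n tau0 by simp
  finally show ?thesis .
qed

lemma B_deriv: "L2_norm T (\<lambda>t. toVs j (vector_derivative (uhat T N u) (at t))) \<le> ennreal (sqrt Gb)"
  unfolding L2_norm_def
proof (rule ensqrt_le)
  show "0 \<le> sqrt Gb" using Gb0 by simp
  define G where "G = (\<lambda>k. real k * \<tau>) ` {0..N}"
  have "(\<integral>\<^sup>+ t. ennreal ((norm (toVs j (vector_derivative (uhat T N u) (at t))))\<^sup>2) \<partial>lebesgue_on {0..T})
      \<le> ennreal (\<tau> * (\<Sum>n\<in>{1..N}. (Gn n)\<^sup>2))"
  proof (rule int_piecewise[OF tau0 NT, of G])
    show "finite G" unfolding G_def by simp
    fix t assume t: "t \<in> {0..T}" "t \<notin> G"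
    have "0 \<in> G" unfolding G_def by force
    then have t0: "0 < t" using t by (cases "t = 0") auto
    define n where "n = kidx t"
    have k: "n \<in> {1..N}" "real n - 1 < t / \<tau>" "t / \<tau> \<le> real n" "t \<in> {(real n - 1) * \<tau> .. real n * \<tau>}"
      using kidx_in[OF t0] t unfolding n_def by auto
    have "t / \<tau> \<noteq> real n"
    proof
      assume "t / \<tau> = real n"
      then have "t = real n * \<tau>" using tau0 by (simp add: field_simps)
      then have "t \<in> G" unfolding G_def using k(1) by auto
      then show False using t by simp
    qed
    then have "t / \<tau> < real n" using k(3) by simp
    then have lt: "t < real n * \<tau>" using tau0 by (simp add: field_simps)
    have gt: "(real n - 1) * \<tau> < t" using k(2) tau0 by (simp add: field_simps)
    have "vector_derivative (uhat T N u) (at t) = g n" by (rule deriv_at[OF k(1) gt lt])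
    then show "\<exists>n\<in>{1..N}. t \<in> {(real n - 1) * \<tau> .. real n * \<tau>} \<and>
        (norm (toVs j (vector_derivative (uhat T N u) (at t))))\<^sup>2 \<le> (Gn n)\<^sup>2"
      using k unfolding Gn_def by auto
  qed simp
  also have "\<dots> \<le> ennreal Gb" using Gsum by (simp add: ennreal_leI)
  finally show "(\<integral>\<^sup>+ t. ennreal ((norm (toVs j (vector_derivative (uhat T N u) (at t))))\<^sup>2) \<partial>lebesgue_on {0..T})
      \<le> ennreal ((sqrt Gb)\<^sup>2)" using Gb0 by simp
qed

end


theorem lemma4p4:
  fixes j :: "'v::banach \<Rightarrow> 'h::{real_inner, complete_space}"
    and i1 :: "'v \<Rightarrow> 'z::banach" and i2 :: "'z \<Rightarrow> 'h" and iota2 :: "'z \<Rightarrow> 'u::banach"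
    and iota :: "'v \<Rightarrow> 'u"
    and A :: "'v \<Rightarrow> ('v \<Rightarrow>\<^sub>L real)"
    and J :: "'u \<Rightarrow> real"
    and f :: "real \<Rightarrow> ('v \<Rightarrow>\<^sub>L real)"
    and u0 :: 'h
    and T a b \<alpha> \<beta> d c0 :: real
    and u :: "nat \<Rightarrow> nat \<Rightarrow> 'v"
    and xi :: "nat \<Rightarrow> nat \<Rightarrow> ('u \<Rightarrow>\<^sub>L real)"
  assumes V_refl: "reflexive_space TYPE('v)" and V_sep: "separable_space TYPE('v)"
    and H_sep: "separable_space TYPE('h)"
    and U_refl: "reflexive_space TYPE('u)"
    \<comment> \<open>V \<subset> H \<subset> V* dense continuous embeddings, V \<subset> H compact\<close>
    and j_lin: "bounded_linear j" and j_inj: "inj j" and j_dense: "closure (range j) = UNIV"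
    and j_compact: "compact_operator j"
    and H_Vs_inj: "inj (HtoVs j)" and H_Vs_dense: "closure (range (HtoVs j)) = UNIV"
    \<comment> \<open>H(A)\<close>
    and A_pm: "pseudomonotone A"
    and a_nonneg: "a \<ge> 0" and b_pos: "b > 0"
    and A_growth: "\<And>v. norm (A v) \<le> a + b * norm v"
    and alpha_pos: "\<alpha> > 0" and beta_nonneg: "\<beta> \<ge> 0"
    and A_coerc: "\<And>v. blinfun_apply (A v) v \<ge> \<alpha> * (norm v)\<^sup>2 - \<beta> * (norm (j v))\<^sup>2"
    \<comment> \<open>H(J)\<close>
    and J_loclip: "locally_lipschitz J" and d_pos: "d > 0"
    and J_growth: "\<And>w \<xi>. \<xi> \<in> clarke_subdiff J w \<Longrightarrow> norm \<xi> \<le> d * (1 + norm w)"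
    \<comment> \<open>H(iota)\<close>
    and iota_lin: "bounded_linear iota" and iota_compact: "compact_operator iota"
    and i1_lin: "bounded_linear i1" and i1_inj: "inj i1" and i1_compact: "compact_operator i1"
    and i2_lin: "bounded_linear i2" and i2_inj: "inj i2" and j_factor: "j = i2 \<circ> i1"
    and iota2_lin: "bounded_linear iota2" and iota_factor: "iota = iota2 \<circ> i1"
    \<comment> \<open>H(f), H(0), T\<close>
    and T_pos: "T > 0"
    and f_meas: "f \<in> borel_measurable (lebesgue_on {0..T})"
    and f_L2: "(\<integral>\<^sup>+ t. ennreal ((norm (f t))\<^sup>2) \<partial>lebesgue_on {0..T}) < \<infinity>"
    \<comment> \<open>initial values u_tau^0 = u N 0, tau = T/N\<close>
    and u0_conv: "(\<lambda>N. j (u N 0)) \<longlonglongrightarrow> u0"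
    and u0_bound: "\<And>N. N > 0 \<Longrightarrow> norm (u N 0) \<le> c0 / sqrt (T / real N)"
    \<comment> \<open>for all sufficiently small tau, (u N, xi N) solves Problem P_tau\<close>
    and sol: "eventually (\<lambda>N. rothe_solution j A iota J f T N (u N) (xi N)) sequentially"
  shows "\<exists>c>0. eventually (\<lambda>N.
            L2_norm T (ubar T N (u N)) \<le> ennreal c
          \<and> L2_norm T (uhat T N (u N)) \<le> ennreal c
          \<and> Linf_norm T (\<lambda>t. j (ubar T N (u N) t)) \<le> ereal c
          \<and> Linf_norm T (\<lambda>t. j (uhat T N (u N) t)) \<le> ereal c
          \<and> L2_norm T (xibar T N (xi N)) \<le> ennreal c
          \<and> M22_norm T j (ubar T N (u N)) \<le> ennreal c
          \<and> L2_norm T (\<lambda>t. toVs j (vector_derivative (uhat T N (u N)) (at t))) \<le> ennreal c)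
        sequentially"
proof -
  obtain Ki where Ki: "\<And>v. norm (iota v) \<le> norm v * Ki" "Ki \<ge> 0"
    using bounded_linear.nonneg_bounded[OF iota_lin] by blast
  have del: "\<alpha> / (6 * d) > 0" using alpha_pos d_pos by simp
  obtain Ce where Ce: "Ce \<ge> 0" "\<And>v. (norm (iota v))\<^sup>2 \<le> \<alpha> / (6 * d) * (norm v)\<^sup>2 + Ce * (norm (j v))\<^sup>2"
    using ehrling_iota[OF i1_compact i2_lin i2_inj iota2_lin iota_factor j_factor del] by blast
  define \<Phi> where "\<Phi> = enn2real (\<integral>\<^sup>+ t. ennreal ((norm (f t))\<^sup>2) \<partial>lebesgue_on {0..T})"
  have Phi: "(\<integral>\<^sup>+ t. ennreal ((norm (f t))\<^sup>2) \<partial>lebesgue_on {0..T}) = ennreal \<Phi>"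
    unfolding \<Phi>_def using f_L2 by (simp add: less_top[symmetric])
  have Phi0: "\<Phi> \<ge> 0" unfolding \<Phi>_def by simp
  have "Bseq (\<lambda>N. j (u N 0))" using u0_conv by (intro convergent_imp_Bseq convergentI)
  then obtain M0 where M0: "\<And>N. norm (j (u N 0)) \<le> M0" by (metis BseqE)
  define \<beta>' where "\<beta>' = \<beta> + 3 * d * Ce / 2"
  obtain K0 where K0: "\<And>N. N \<ge> K0 \<Longrightarrow> rothe_solution j A iota J f T N (u N) (xi N)"
    using sol unfolding eventually_sequentially by blast
  define K where "K = max (max K0 1) (nat \<lceil>8 * T * \<beta>'\<rceil>)"
  define Vb where "Vb = rothe.Vb T \<alpha> \<beta> d Ce \<Phi> M0"
  define Eb where "Eb = rothe.Eb T \<alpha> \<beta> d Ce \<Phi> M0"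
  define Gb where "Gb = rothe.Gb T \<alpha> \<beta> d a b Ki Ce \<Phi> M0"
  define Xb where "Xb = rothe.Xb T \<alpha> \<beta> d Ki Ce \<Phi> M0"
  define C where "C = 1 + \<bar>sqrt Vb\<bar> + \<bar>sqrt (108 * (c0\<^sup>2 + Vb))\<bar> + \<bar>9 * sqrt (M0\<^sup>2 + Eb)\<bar> + \<bar>sqrt Xb\<bar>
     + \<bar>sqrt ((3/2) * T * Gb)\<bar> + \<bar>sqrt Gb\<bar>"
  have C0: "C > 0" unfolding C_def by simp
  show ?thesis
  proof (intro exI[of _ C] conjI C0, unfold eventually_sequentially, intro exI[of _ K] allI impI)
    fix N assume NK: "K \<le> N"
    have N1: "N \<ge> 1" and NK0: "N \<ge> K0" and N8: "real N \<ge> 8 * T * \<beta>'"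
      using NK unfolding K_def by (auto simp: nat_le_iff ceiling_le_iff)
    have tau: "T / real N > 0" using T_pos N1 by simp
    have small: "(T / real N) * (\<beta> + 3 * d * Ce / 2) \<le> 1/8"
    proof -
      have "(T / real N) * \<beta>' = (T * \<beta>') / real N" by simp
      also have "\<dots> \<le> 1/8" using N8 N1 by (simp add: divide_le_eq)
      finally show ?thesis unfolding \<beta>'_def .
    qed
    have c0N: "(T / real N) * (norm (u N 0))\<^sup>2 \<le> c0\<^sup>2"
    proof -
      have b: "norm (u N 0) \<le> c0 / sqrt (T / real N)" using u0_bound N1 by simp
      then have "(norm (u N 0))\<^sup>2 \<le> (c0 / sqrt (T / real N))\<^sup>2" by (intro power_mono) auto
      also have "\<dots> = c0\<^sup>2 / (T / real N)" using tau by (simp add: power_divide)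
      finally have "(T / real N) * (norm (u N 0))\<^sup>2 \<le> (T / real N) * (c0\<^sup>2 / (T / real N))"
        using tau by (intro mult_left_mono) auto
      moreover have "(T / real N) * (c0\<^sup>2 / (T / real N)) = c0\<^sup>2" using tau T_pos N1 by simp
      ultimately show ?thesis by simp
    qed
    have Ki': "\<And>v. norm (iota v) \<le> Ki * norm v" using Ki(1) by (simp add: mult.commute)
    interpret R: rothe j A iota J f T N "u N" "xi N" \<alpha> \<beta> d a b Ki Ce \<Phi> M0 c0
      by (rule rothe.intro[OF j_lin iota_lin Ki' Ki(2) Ce(2) Ce(1) a_nonneg b_pos A_growth alpha_pos
          beta_nonneg A_coerc d_pos J_growth T_pos N1 f_meas Phi Phi0 K0[OF NK0] M0 c0N small])
    have Vb: "R.Vb = Vb" and Eb: "R.Eb = Eb" and Gb: "R.Gb = Gb" and Xb: "R.Xb = Xb"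
      unfolding Vb_def Eb_def Gb_def Xb_def by simp_all
    have sV: "sqrt Vb \<le> C" unfolding C_def by simp
    show "L2_norm T (ubar T N (u N)) \<le> ennreal C
          \<and> L2_norm T (uhat T N (u N)) \<le> ennreal C
          \<and> Linf_norm T (\<lambda>t. j (ubar T N (u N) t)) \<le> ereal C
          \<and> Linf_norm T (\<lambda>t. j (uhat T N (u N) t)) \<le> ereal C
          \<and> L2_norm T (xibar T N (xi N)) \<le> ennreal C
          \<and> M22_norm T j (ubar T N (u N)) \<le> ennreal C
          \<and> L2_norm T (\<lambda>t. toVs j (vector_derivative (uhat T N (u N)) (at t))) \<le> ennreal C"
    proof (intro conjI)
      have Vb0: "Vb \<ge> 0" using R.Vb0 Vb by simp
      have Eb0: "Eb \<ge> 0" using R.Eb0 Eb by simp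
      have Gb0: "Gb \<ge> 0" using R.Gb0 Gb by simp
      have Xb0: "Xb \<ge> 0" using R.Xb0 Xb by simp
      note nn = abs_ge_zero[of "sqrt Vb"] abs_ge_zero[of "sqrt (108 * (c0\<^sup>2 + Vb))"]
        abs_ge_zero[of "9 * sqrt (M0\<^sup>2 + Eb)"] abs_ge_zero[of "sqrt Xb"]
        abs_ge_zero[of "sqrt ((3/2) * T * Gb)"] abs_ge_zero[of "sqrt Gb"]
      have r1: "sqrt Vb \<le> C" unfolding C_def using nn abs_ge_self[of "sqrt Vb"] by linarith
      have r2: "sqrt (108 * (c0\<^sup>2 + Vb)) \<le> C" unfolding C_def using nn abs_ge_self[of "sqrt (108 * (c0\<^sup>2 + Vb))"] by linarith
      have r3: "9 * sqrt (M0\<^sup>2 + Eb) \<le> C" unfolding C_def using nn abs_ge_self[of "9 * sqrt (M0\<^sup>2 + Eb)"] by linarith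
      have r3': "sqrt (M0\<^sup>2 + Eb) \<le> C" using r3 Eb0 by (smt (verit) real_sqrt_ge_zero zero_le_power2)
      have r4: "sqrt Xb \<le> C" unfolding C_def using nn abs_ge_self[of "sqrt Xb"] by linarith
      have r5: "sqrt Vb + sqrt ((3/2) * T * Gb) \<le> C" unfolding C_def
        using nn abs_ge_self[of "sqrt Vb"] abs_ge_self[of "sqrt ((3/2) * T * Gb)"] by linarith
      have r6: "sqrt Gb \<le> C" unfolding C_def using nn abs_ge_self[of "sqrt Gb"] by linarith
      show "L2_norm T (ubar T N (u N)) \<le> ennreal C"
        using R.B_L2_ubar ennreal_leI[OF r1] unfolding Vb by (rule order_trans)
      show "L2_norm T (uhat T N (u N)) \<le> ennreal C"
        using R.B_L2_uhat ennreal_leI[OF r2] unfolding Vb by (rule order_trans)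
      show "Linf_norm T (\<lambda>t. j (ubar T N (u N) t)) \<le> ereal C"
        using R.B_Linf_ubar r3' unfolding Eb by (simp add: order_trans)
      show "Linf_norm T (\<lambda>t. j (uhat T N (u N) t)) \<le> ereal C"
        using R.B_Linf_uhat r3 unfolding Eb by (simp add: order_trans)
      show "L2_norm T (xibar T N (xi N)) \<le> ennreal C"
        using R.B_L2_xibar ennreal_leI[OF r4] unfolding Xb by (rule order_trans)
      show "M22_norm T j (ubar T N (u N)) \<le> ennreal C"
        using R.B_M22 ennreal_leI[OF r5] unfolding Vb Gb by (rule order_trans)
      show "L2_norm T (\<lambda>t. toVs j (vector_derivative (uhat T N (u N)) (at t))) \<le> ennreal C"
        using R.B_deriv ennreal_leI[OF r6] unfolding Gb by (rule order_trans)
    qed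
  qed
qed



end
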